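(* Let $(M,g)$ be a Riemannian manifold of dimension $n\ge 3$ with constant scalar curvature, and let $\xi$ be a vector field of constant length such that its dual $1$-form $\xi^\flat$ is a solution of the Schrödinger–Ricci equation $(\Delta+\mathrm{Ric}_\sharp)(\xi^\flat)+d(\mathrm{div}\,\xi)=0$. If $(g,\xi,\gamma,\delta)$ defines a $\xi^\flat$-Ricci soliton on $M$, i.e. $\gamma,\delta$ are real constants with $\frac12\mathcal{L}_\xi g+\mathrm{Ric}=\gamma g+\delta\,\xi^\flat\otimes\xi^\flat$, then either $\delta=0$ (the soliton is a Ricci soliton) or $\mathrm{div}\,\xi=0$.
   Context: $\xi^\flat=g(\xi,\cdot)$, $\mathrm{Ric}_\sharp(\theta)(X)=\mathrm{Ric}(\theta^\sharp,X)$. $\Delta$ is the operator on $1$-forms which the paper calls the Laplace–Hodge operator, with convention fixed by the identity $\mathrm{div}(\mathcal{L}_Xg)=(\Delta+\mathrm{Ric}_\sharp)(X^\flat)+d(\mathrm{div}X)$ for every vector field $X$ (with $(\mathrm{div}T)(X)=\sum_i(\nabla_{E_i}T)(E_i,X)$ for a symmetric $(0,2)$-tensor $T$). *)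

theory Defs
  imports "HOL-Analysis.Analysis"
begin

text \<open>Local coordinate rendering of Riemannian geometry on an open set U of R^n
  (index type 'n, n = CARD('n)).\<close>

type_synonym 'n field = "real^'n \<Rightarrow> real"

definition pd :: "'n::finite \<Rightarrow> (real^'n \<Rightarrow> real) \<Rightarrow> real^'n \<Rightarrow> real" where
  "pd i f x = frechet_derivative f (at x) (axis i 1)"

fun Ck :: "nat \<Rightarrow> (real^'n::finite) set \<Rightarrow> (real^'n \<Rightarrow> real) \<Rightarrow> bool" where
  "Ck 0 U f = continuous_on U f"
| "Ck (Suc k) U f = ((\<forall>x\<in>U. f differentiable (at x)) \<and> (\<forall>i. Ck k U (pd i f)))"

definition smooth_on :: "(real^'n::finite) set \<Rightarrow> (real^'n \<Rightarrow> real) \<Rightarrow> bool" where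
  "smooth_on U f = (\<forall>k. Ck k U f)"

definition riemannian_metric :: "(real^'n::finite) set \<Rightarrow> (real^'n \<Rightarrow> real^'n^'n) \<Rightarrow> bool" where
  "riemannian_metric U g =
     ((\<forall>i j. smooth_on U (\<lambda>x. g x $ i $ j)) \<and>
      (\<forall>x\<in>U. \<forall>i j. g x $ i $ j = g x $ j $ i) \<and>
      (\<forall>x\<in>U. \<forall>v. v \<noteq> 0 \<longrightarrow> (\<Sum>i\<in>UNIV. \<Sum>j\<in>UNIV. v $ i * g x $ i $ j * v $ j) > 0))"

definition ginv :: "(real^'n::finite \<Rightarrow> real^'n^'n) \<Rightarrow> real^'n \<Rightarrow> real^'n^'n" where
  "ginv g x = matrix_inv (g x)"

definition christoffel :: "(real^'n::finite \<Rightarrow> real^'n^'n) \<Rightarrow> 'n \<Rightarrow> 'n \<Rightarrow> 'n \<Rightarrow> real^'n \<Rightarrow> real" where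
  "christoffel g k i j x = (1/2) * (\<Sum>l\<in>UNIV. ginv g x $ k $ l *
      (pd i (\<lambda>y. g y $ j $ l) x + pd j (\<lambda>y. g y $ i $ l) x - pd l (\<lambda>y. g y $ i $ j) x))"

definition ricci :: "(real^'n::finite \<Rightarrow> real^'n^'n) \<Rightarrow> 'n \<Rightarrow> 'n \<Rightarrow> real^'n \<Rightarrow> real" where
  "ricci g i j x =
     (\<Sum>k\<in>UNIV. pd k (christoffel g k i j) x)
   - (\<Sum>k\<in>UNIV. pd j (christoffel g k i k) x)
   + (\<Sum>k\<in>UNIV. \<Sum>l\<in>UNIV. christoffel g k k l x * christoffel g l i j x)
   - (\<Sum>k\<in>UNIV. \<Sum>l\<in>UNIV. christoffel g k j l x * christoffel g l i k x)"

definition scalar_curv :: "(real^'n::finite \<Rightarrow> real^'n^'n) \<Rightarrow> real^'n \<Rightarrow> real" where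
  "scalar_curv g x = (\<Sum>i\<in>UNIV. \<Sum>j\<in>UNIV. ginv g x $ i $ j * ricci g i j x)"

definition flat :: "(real^'n::finite \<Rightarrow> real^'n^'n) \<Rightarrow> (real^'n \<Rightarrow> real^'n) \<Rightarrow> 'n \<Rightarrow> real^'n \<Rightarrow> real" where
  "flat g \<xi> i x = (\<Sum>j\<in>UNIV. g x $ i $ j * \<xi> x $ j)"

definition sq_length :: "(real^'n::finite \<Rightarrow> real^'n^'n) \<Rightarrow> (real^'n \<Rightarrow> real^'n) \<Rightarrow> real^'n \<Rightarrow> real" where
  "sq_length g \<xi> x = (\<Sum>i\<in>UNIV. \<Sum>j\<in>UNIV. g x $ i $ j * \<xi> x $ i * \<xi> x $ j)"

definition divergence :: "(real^'n::finite \<Rightarrow> real^'n^'n) \<Rightarrow> (real^'n \<Rightarrow> real^'n) \<Rightarrow> real^'n \<Rightarrow> real" where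
  "divergence g \<xi> x = (\<Sum>i\<in>UNIV. pd i (\<lambda>y. \<xi> y $ i) x)
     + (\<Sum>i\<in>UNIV. \<Sum>k\<in>UNIV. christoffel g i i k x * \<xi> x $ k)"

definition lie_metric :: "(real^'n::finite \<Rightarrow> real^'n^'n) \<Rightarrow> (real^'n \<Rightarrow> real^'n) \<Rightarrow> 'n \<Rightarrow> 'n \<Rightarrow> real^'n \<Rightarrow> real" where
  "lie_metric g \<xi> i j x =
     (\<Sum>k\<in>UNIV. \<xi> x $ k * pd k (\<lambda>y. g y $ i $ j) x)
   + (\<Sum>k\<in>UNIV. g x $ k $ j * pd i (\<lambda>y. \<xi> y $ k) x)
   + (\<Sum>k\<in>UNIV. g x $ i $ k * pd j (\<lambda>y. \<xi> y $ k) x)"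

definition cov1 :: "(real^'n::finite \<Rightarrow> real^'n^'n) \<Rightarrow> ('n \<Rightarrow> real^'n \<Rightarrow> real) \<Rightarrow> 'n \<Rightarrow> 'n \<Rightarrow> real^'n \<Rightarrow> real" where
  "cov1 g \<theta> k j x = pd k (\<theta> j) x - (\<Sum>l\<in>UNIV. christoffel g l k j x * \<theta> l x)"

definition cov2 :: "(real^'n::finite \<Rightarrow> real^'n^'n) \<Rightarrow> ('n \<Rightarrow> real^'n \<Rightarrow> real) \<Rightarrow> 'n \<Rightarrow> 'n \<Rightarrow> 'n \<Rightarrow> real^'n \<Rightarrow> real" where
  "cov2 g \<theta> i k j x = pd i (cov1 g \<theta> k j) x
     - (\<Sum>l\<in>UNIV. christoffel g l i k x * cov1 g \<theta> l j x)
     - (\<Sum>l\<in>UNIV. christoffel g l i j x * cov1 g \<theta> k l x)"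

text \<open>The Laplace operator on 1-forms in the paper's convention
  div(L_X g) = (Delta + Ric_sharp)(X^flat) + d(div X): Delta = trace of nabla^2.\<close>
definition laplace1 :: "(real^'n::finite \<Rightarrow> real^'n^'n) \<Rightarrow> ('n \<Rightarrow> real^'n \<Rightarrow> real) \<Rightarrow> 'n \<Rightarrow> real^'n \<Rightarrow> real" where
  "laplace1 g \<theta> j x = (\<Sum>i\<in>UNIV. \<Sum>k\<in>UNIV. ginv g x $ i $ k * cov2 g \<theta> i k j x)"

definition ric_sharp :: "(real^'n::finite \<Rightarrow> real^'n^'n) \<Rightarrow> ('n \<Rightarrow> real^'n \<Rightarrow> real) \<Rightarrow> 'n \<Rightarrow> real^'n \<Rightarrow> real" where
  "ric_sharp g \<theta> j x = (\<Sum>a\<in>UNIV. \<Sum>b\<in>UNIV. ginv g x $ a $ b * \<theta> b x * ricci g a j x)"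

end

theory Submission
  imports Defs
begin

lemma pd_has: "(f has_derivative f') (at x) \<Longrightarrow> pd i f x = f' (axis i 1)"
  by (simp add: pd_def frechet_derivative_at[symmetric])

lemma pd_cong:
  assumes "open U" "x \<in> U" "\<And>y. y \<in> U \<Longrightarrow> f y = h y"
  shows "pd i f x = pd i h x"
proof -
  have "(\<lambda>f'. (f has_derivative f') (at x)) = (\<lambda>f'. (h has_derivative f') (at x))"
    using has_derivative_transform_within_open[OF _ assms(1,2), of f _ UNIV h]
      has_derivative_transform_within_open[OF _ assms(1,2), of h _ UNIV f] assms(3)
    by (intro ext iffI) auto
  then show ?thesis unfolding pd_def frechet_derivative_def by simp
qed

lemma diff_cong:
  assumes "open U" "x \<in> U" "\<And>y. y \<in> U \<Longrightarrow> f y = h y" "f differentiable (at x)"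
  shows "h differentiable (at x)"
  using assms has_derivative_transform_within_open[OF _ assms(1,2), of f _ UNIV h]
  unfolding differentiable_def by blast

lemma Ck_cong:
  assumes "open U"
  shows "Ck k U f \<Longrightarrow> (\<And>y. y \<in> U \<Longrightarrow> f y = h y) \<Longrightarrow> Ck k U h"
proof (induction k arbitrary: f h)
  case 0
  then show ?case using continuous_on_cong by (metis Ck.simps(1))
next
  case (Suc k)
  have "\<forall>x\<in>U. h differentiable (at x)"
  proof
    fix x assume "x \<in> U"
    then show "h differentiable (at x)"
      using Suc.prems(1) diff_cong[OF assms \<open>x \<in> U\<close> Suc.prems(2)] by simp
  qed
  moreover have "Ck k U (pd i h)" for i
  proof -
    have "Ck k U (pd i f)" using Suc.prems(1) by simp
    moreover have "pd i f y = pd i h y" if "y \<in> U" for y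
      using pd_cong[OF assms that Suc.prems(2)] .
    ultimately show ?thesis using Suc.IH by blast
  qed
  ultimately show ?case by (simp only: Ck.simps) blast
qed

lemma Ck_mono: "Ck (Suc k) U f \<Longrightarrow> Ck k U f"
proof (induction k arbitrary: f)
  case 0
  then show ?case
    by (auto intro!: continuous_at_imp_continuous_on differentiable_imp_continuous_within)
next
  case (Suc k)
  then have "\<forall>x\<in>U. f differentiable (at x)" "\<And>i. Ck (Suc k) U (pd i f)" by simp_all
  then show ?case using Suc.IH by simp
qed

lemma Ck_le: "Ck k U f \<Longrightarrow> m \<le> k \<Longrightarrow> Ck m U f"
proof (induction k)
  case 0 then show ?case by simp
next
  case (Suc k)
  show ?case
  proof (cases "m = Suc k")
    case False
    then have "m \<le> k" using Suc.prems by simp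
    then show ?thesis using Suc.IH Ck_mono[OF Suc.prems(1)] by blast
  qed (use Suc.prems in simp)
qed

lemma pd_const: "pd i (\<lambda>y. c) x = 0"
  by (rule pd_has[where f'="\<lambda>_. 0", simplified]) (rule has_derivative_const)

lemma pd_const_fun: "pd i (\<lambda>y. c) = (\<lambda>y. 0)"
  using pd_const by (rule ext)

lemma pd_add: "f differentiable (at x) \<Longrightarrow> h differentiable (at x) \<Longrightarrow>
   pd i (\<lambda>y. f y + h y) x = pd i f x + pd i h x"
  unfolding pd_def
  by (metis frechet_derivative_at frechet_derivative_works has_derivative_add)

lemma pd_diff: "f differentiable (at x) \<Longrightarrow> h differentiable (at x) \<Longrightarrow>
   pd i (\<lambda>y. f y - h y) x = pd i f x - pd i h x"
  unfolding pd_def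
  by (metis frechet_derivative_at frechet_derivative_works has_derivative_diff)

lemma pd_mult: "f differentiable (at x) \<Longrightarrow> h differentiable (at x) \<Longrightarrow>
   pd i (\<lambda>y. f y * h y) x = pd i f x * h x + f x * pd i h x"
proof -
  assume a: "f differentiable (at x)" "h differentiable (at x)"
  have "((\<lambda>y. f y * h y) has_derivative
     (\<lambda>v. f x * frechet_derivative h (at x) v + frechet_derivative f (at x) v * h x)) (at x)"
    using has_derivative_mult[OF a(1)[unfolded frechet_derivative_works] a(2)[unfolded frechet_derivative_works]] .
  from pd_has[OF this] show ?thesis by (simp add: pd_def algebra_simps)
qed

lemma pd_sum: "finite A \<Longrightarrow> (\<And>a. a \<in> A \<Longrightarrow> F a differentiable (at x)) \<Longrightarrow>
   pd i (\<lambda>y. \<Sum>a\<in>A. F a y) x = (\<Sum>a\<in>A. pd i (F a) x)"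
proof -
  assume a: "finite A" "\<And>a. a \<in> A \<Longrightarrow> F a differentiable (at x)"
  have "((\<lambda>y. \<Sum>a\<in>A. F a y) has_derivative (\<lambda>v. \<Sum>a\<in>A. frechet_derivative (F a) (at x) v)) (at x)"
    using a by (intro has_derivative_sum) (simp add: frechet_derivative_works)
  from pd_has[OF this] show ?thesis by (simp add: pd_def)
qed

lemma pd_inverse: "f differentiable (at x) \<Longrightarrow> f x \<noteq> 0 \<Longrightarrow>
   pd i (\<lambda>y. inverse (f y)) x = - (inverse (f x) * pd i f x * inverse (f x))"
proof -
  assume a: "f differentiable (at x)" "f x \<noteq> 0"
  from Deriv.has_derivative_inverse[OF a(2) a(1)[unfolded frechet_derivative_works]]
  have "pd i (\<lambda>y. inverse (f y)) x = - (inverse (f x) * frechet_derivative f (at x) (axis i 1) * inverse (f x))"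
    by (rule pd_has)
  then show ?thesis by (simp add: pd_def)
qed

lemma Ck_const: "Ck k U (\<lambda>y. c)"
  by (induction k arbitrary: c) (auto simp: pd_const_fun)

lemma Ck_add: "open U \<Longrightarrow> Ck k U f \<Longrightarrow> Ck k U h \<Longrightarrow> Ck k U (\<lambda>y. f y + h y)"
proof (induction k arbitrary: f h)
  case 0 then show ?case by (auto intro: continuous_on_add)
next
  case (Suc k)
  have df: "\<forall>x\<in>U. f differentiable (at x)" and dh: "\<forall>x\<in>U. h differentiable (at x)"
    and pf: "\<And>i. Ck k U (pd i f)" and ph: "\<And>i. Ck k U (pd i h)"
    using Suc.prems by auto
  have "Ck k U (pd i (\<lambda>y. f y + h y))" for i
  proof (rule Ck_cong[OF \<open>open U\<close>])
    show "Ck k U (\<lambda>y. pd i f y + pd i h y)" using Suc.IH[OF Suc.prems(1) pf ph] .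
    show "pd i f y + pd i h y = pd i (\<lambda>y. f y + h y) y" if "y \<in> U" for y
      using df dh that by (simp add: pd_add)
  qed
  moreover have "\<forall>x\<in>U. (\<lambda>y. f y + h y) differentiable (at x)" using df dh by simp
  ultimately show ?case by (simp only: Ck.simps) blast
qed

lemma Ck_mult: "open U \<Longrightarrow> Ck k U f \<Longrightarrow> Ck k U h \<Longrightarrow> Ck k U (\<lambda>y. f y * h y)"
proof (induction k arbitrary: f h)
  case 0 then show ?case by (auto intro: continuous_on_mult)
next
  case (Suc k)
  have df: "\<forall>x\<in>U. f differentiable (at x)" and dh: "\<forall>x\<in>U. h differentiable (at x)"
    and pf: "\<And>i. Ck k U (pd i f)" and ph: "\<And>i. Ck k U (pd i h)"
    using Suc.prems by auto
  have f: "Ck k U f" and h: "Ck k U h" using Suc.prems Ck_mono by blast+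
  have "Ck k U (pd i (\<lambda>y. f y * h y))" for i
  proof (rule Ck_cong[OF \<open>open U\<close>])
    show "Ck k U (\<lambda>y. pd i f y * h y + f y * pd i h y)"
      by (rule Ck_add[OF \<open>open U\<close> Suc.IH[OF Suc.prems(1) pf h] Suc.IH[OF Suc.prems(1) f ph]])
    show "pd i f y * h y + f y * pd i h y = pd i (\<lambda>y. f y * h y) y" if "y \<in> U" for y
      using df dh that by (simp add: pd_mult)
  qed
  moreover have "\<forall>x\<in>U. (\<lambda>y. f y * h y) differentiable (at x)" using df dh by simp
  ultimately show ?case by (simp only: Ck.simps) blast
qed

lemma Ck_sum: assumes "open U" "finite A" "\<And>a. a \<in> A \<Longrightarrow> Ck k U (F a)" shows "Ck k U (\<lambda>y. \<Sum>a\<in>A. F a y)"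
  using assms(2,3) by (induction A rule: finite_induct) (simp_all add: Ck_const Ck_add[OF assms(1)])

lemma Ck_prod: assumes "open U" "finite A" "\<And>a. a \<in> A \<Longrightarrow> Ck k U (F a)" shows "Ck k U (\<lambda>y. \<Prod>a\<in>A. F a y)"
  using assms(2,3) by (induction A rule: finite_induct) (simp_all add: Ck_const Ck_mult[OF assms(1)])

lemma Ck_inverse: "open U \<Longrightarrow> smooth_on U f \<Longrightarrow> (\<And>y. y \<in> U \<Longrightarrow> f y \<noteq> 0) \<Longrightarrow> Ck k U (\<lambda>y. inverse (f y))"
proof (induction k)
  case 0
  have "continuous_on U f" using 0 unfolding smooth_on_def by (metis Ck.simps(1))
  then show ?case using 0 by (simp add: continuous_on_inverse)
next
  case (Suc k)
  have d: "\<forall>y\<in>U. f differentiable (at y)" using Suc.prems unfolding smooth_on_def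
    by (metis Ck.simps(2))
  have "Ck k U (pd i (\<lambda>y. inverse (f y)))" for i
  proof (rule Ck_cong[OF \<open>open U\<close>])
    have p: "Ck k U (pd i f)" using Suc.prems unfolding smooth_on_def by (metis Ck.simps(2))
    have a: "Ck k U (\<lambda>y. inverse (f y) * pd i f y)"
      by (rule Ck_mult[OF \<open>open U\<close> Suc.IH[OF Suc.prems] p])
    have b: "Ck k U (\<lambda>y. (inverse (f y) * pd i f y) * inverse (f y))"
      by (rule Ck_mult[OF \<open>open U\<close> a Suc.IH[OF Suc.prems]])
    show "Ck k U (\<lambda>y. - 1 * ((inverse (f y) * pd i f y) * inverse (f y)))"
      by (rule Ck_mult[OF \<open>open U\<close> Ck_const b])
    show "- 1 * ((inverse (f y) * pd i f y) * inverse (f y)) = pd i (\<lambda>y. inverse (f y)) y" if "y \<in> U" for y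
      using d that Suc.prems by (simp add: pd_inverse)
  qed
  moreover have "\<forall>x\<in>U. (\<lambda>y. inverse (f y)) differentiable (at x)" using d Suc.prems by simp
  ultimately show ?case by (simp only: Ck.simps) blast
qed

lemma line_deriv:
  fixes f :: "real^'n::finite \<Rightarrow> real"
  assumes "f differentiable (at (p + s *\<^sub>R v))"
  shows "((\<lambda>t. f (p + t *\<^sub>R v)) has_derivative (\<lambda>h. h * frechet_derivative f (at (p + s *\<^sub>R v)) v)) (at s within S)"
proof -
  have l: "((\<lambda>t. p + t *\<^sub>R v) has_derivative (\<lambda>h. h *\<^sub>R v)) (at s within S)"
    by (auto intro!: derivative_eq_intros)
  have f: "(f has_derivative frechet_derivative f (at (p + s *\<^sub>R v))) (at (p + s *\<^sub>R v))"
    using assms frechet_derivative_works by blast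
  have bl: "linear (frechet_derivative f (at (p + s *\<^sub>R v)))"
    using has_derivative_linear[OF f] .
  from has_derivative_compose[OF l f] show ?thesis
    using linear_scale[OF bl] by simp
qed

lemma smooth_diff: "smooth_on U f \<Longrightarrow> x \<in> U \<Longrightarrow> f differentiable (at x)"
  unfolding smooth_on_def by (metis Ck.simps(2))

lemma smooth_pd: "smooth_on U f \<Longrightarrow> smooth_on U (pd i f)"
  unfolding smooth_on_def by (metis Ck.simps(2))

lemma smooth_cont: "smooth_on U f \<Longrightarrow> continuous_on U f"
  unfolding smooth_on_def by (metis Ck.simps(1))

lemma mixed_mvt:
  fixes f :: "real^'n::finite \<Rightarrow> real"
  assumes sm: "smooth_on U f" and h: "h > 0"
    and sub: "\<And>s t. s \<in> {0..h} \<Longrightarrow> t \<in> {0..h} \<Longrightarrow> x + s *\<^sub>R axis i 1 + t *\<^sub>R axis j 1 \<in> U"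
  shows "\<exists>s t. s \<in> {0..h} \<and> t \<in> {0..h} \<and>
     f (x + h *\<^sub>R axis i 1 + h *\<^sub>R axis j 1) - f (x + h *\<^sub>R axis i 1) - f (x + h *\<^sub>R axis j 1) + f x
       = h * h * pd j (pd i f) (x + s *\<^sub>R axis i 1 + t *\<^sub>R axis j 1)"
proof -
  define e :: "real^'n" where "e = axis i 1"
  define d :: "real^'n" where "d = axis j 1"
  define \<phi> where "\<phi> s = f ((x + h *\<^sub>R d) + s *\<^sub>R e) - f (x + s *\<^sub>R e)" for s
  have "(\<phi> has_derivative (\<lambda>\<delta>. \<delta> * (pd i f ((x + h *\<^sub>R d) + s *\<^sub>R e) - pd i f (x + s *\<^sub>R e)))) (at s within {0..h})"
    if "0 \<le> s" "s \<le> h" for s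
  proof -
    have in1: "(x + h *\<^sub>R d) + s *\<^sub>R e \<in> U" using sub[of s h] that h
      by (simp add: e_def d_def algebra_simps)
    have in2: "x + s *\<^sub>R e \<in> U" using sub[of s 0] that h by (simp add: e_def d_def)
    have "(\<phi> has_derivative (\<lambda>\<delta>. \<delta> * frechet_derivative f (at ((x + h *\<^sub>R d) + s *\<^sub>R e)) e
       - \<delta> * frechet_derivative f (at (x + s *\<^sub>R e)) e)) (at s within {0..h})"
      unfolding \<phi>_def
      by (intro has_derivative_diff line_deriv smooth_diff[OF sm] in1 in2)
    then show ?thesis by (simp add: pd_def e_def algebra_simps)
  qed
  from mvt_simple[OF h this]
  obtain s where s: "s \<in> {0<..<h}" and
    es: "\<phi> h - \<phi> 0 = (h - 0) * (pd i f ((x + h *\<^sub>R d) + s *\<^sub>R e) - pd i f (x + s *\<^sub>R e))"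
    by auto
  define \<psi> where "\<psi> t = pd i f ((x + s *\<^sub>R e) + t *\<^sub>R d)" for t
  have "(\<psi> has_derivative (\<lambda>\<delta>. \<delta> * pd j (pd i f) ((x + s *\<^sub>R e) + t *\<^sub>R d))) (at t within {0..h})"
    if "0 \<le> t" "t \<le> h" for t
  proof -
    have in1: "(x + s *\<^sub>R e) + t *\<^sub>R d \<in> U" using sub[of s t] that s
      by (simp add: e_def d_def)
    show ?thesis unfolding \<psi>_def pd_def[of j] d_def
      by (intro line_deriv smooth_diff[OF smooth_pd[OF sm]] in1[unfolded d_def])
  qed
  from mvt_simple[OF h this]
  obtain t where t: "t \<in> {0<..<h}" and
    et: "\<psi> h - \<psi> 0 = (h - 0) * pd j (pd i f) ((x + s *\<^sub>R e) + t *\<^sub>R d)"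
    by auto
  have "f (x + h *\<^sub>R e + h *\<^sub>R d) - f (x + h *\<^sub>R e) - f (x + h *\<^sub>R d) + f x = \<phi> h - \<phi> 0"
    by (simp add: \<phi>_def algebra_simps)
  also have "\<dots> = h * (\<psi> h - \<psi> 0)" using es by (simp add: \<psi>_def algebra_simps)
  also have "\<dots> = h * h * pd j (pd i f) (x + s *\<^sub>R e + t *\<^sub>R d)" using et by simp
  finally show ?thesis using s t unfolding e_def d_def
    by (intro exI[of _ s] exI[of _ t]) auto
qed

lemma schwarz:
  fixes f :: "real^'n::finite \<Rightarrow> real"
  assumes U: "open U" and sm: "smooth_on U f" and x: "x \<in> U"
  shows "pd i (pd j f) x = pd j (pd i f) x"
proof (rule ccontr)
  assume ne: "pd i (pd j f) x \<noteq> pd j (pd i f) x"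
  define A where "A = pd j (pd i f) x"
  define B where "B = pd i (pd j f) x"
  define \<epsilon> where "\<epsilon> = \<bar>A - B\<bar> / 2"
  have ep: "\<epsilon> > 0" using ne by (simp add: \<epsilon>_def A_def B_def)
  have c1: "continuous (at x) (pd j (pd i f))"
    using smooth_cont[OF smooth_pd[OF smooth_pd[OF sm]]] U x continuous_on_eq_continuous_at by blast
  have c2: "continuous (at x) (pd i (pd j f))"
    using smooth_cont[OF smooth_pd[OF smooth_pd[OF sm]]] U x continuous_on_eq_continuous_at by blast
  obtain d1 where d1: "d1 > 0" "\<And>y. dist y x < d1 \<Longrightarrow> dist (pd j (pd i f) y) A < \<epsilon>"
    using c1 ep unfolding continuous_at_eps_delta A_def by blast
  obtain d2 where d2: "d2 > 0" "\<And>y. dist y x < d2 \<Longrightarrow> dist (pd i (pd j f) y) B < \<epsilon>"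
    using c2 ep unfolding continuous_at_eps_delta B_def by blast
  obtain r0 where r0: "r0 > 0" "ball x r0 \<subseteq> U" using U x open_contains_ball by blast
  define r where "r = min r0 (min d1 d2)"
  have r: "r > 0" using r0 d1 d2 by (simp add: r_def)
  define h where "h = r / 3"
  have h: "h > 0" using r by (simp add: h_def)
  have near: "dist (x + s *\<^sub>R axis a 1 + t *\<^sub>R axis b 1) x < r"
    if "s \<in> {0..h}" "t \<in> {0..h}" for s t a b
  proof -
    have "dist (x + s *\<^sub>R axis a 1 + t *\<^sub>R axis b 1) x = norm (s *\<^sub>R axis a 1 + t *\<^sub>R (axis b 1 :: real^'n))"
      by (simp add: dist_norm)
    also have "\<dots> \<le> norm (s *\<^sub>R axis a 1 :: real^'n) + norm (t *\<^sub>R (axis b 1 :: real^'n))"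
      by (rule norm_triangle_ineq)
    also have "\<dots> = s + t" using that by simp
    also have "\<dots> < r" using that h by (simp add: h_def)
    finally show ?thesis .
  qed
  have inU: "x + s *\<^sub>R axis a 1 + t *\<^sub>R axis b 1 \<in> U" if "s \<in> {0..h}" "t \<in> {0..h}" for s t a b
    using near[OF that, of a b] r0(2) by (auto simp: r_def dist_commute)
  obtain s1 t1 where st1: "s1 \<in> {0..h}" "t1 \<in> {0..h}"
    "f (x + h *\<^sub>R axis i 1 + h *\<^sub>R axis j 1) - f (x + h *\<^sub>R axis i 1) - f (x + h *\<^sub>R axis j 1) + f x
       = h * h * pd j (pd i f) (x + s1 *\<^sub>R axis i 1 + t1 *\<^sub>R axis j 1)"
    using mixed_mvt[OF sm h inU] by blast
  obtain s2 t2 where st2: "s2 \<in> {0..h}" "t2 \<in> {0..h}"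
    "f (x + h *\<^sub>R axis j 1 + h *\<^sub>R axis i 1) - f (x + h *\<^sub>R axis j 1) - f (x + h *\<^sub>R axis i 1) + f x
       = h * h * pd i (pd j f) (x + s2 *\<^sub>R axis j 1 + t2 *\<^sub>R axis i 1)"
    using mixed_mvt[OF sm h inU] by blast
  have "x + h *\<^sub>R axis j 1 + h *\<^sub>R axis i 1 = x + h *\<^sub>R axis i 1 + h *\<^sub>R (axis j 1 :: real^'n)"
    by (simp add: algebra_simps)
  note st2' = st2(3)[unfolded this]
  have "h * h * pd j (pd i f) (x + s1 *\<^sub>R axis i 1 + t1 *\<^sub>R axis j 1) = h * h * pd i (pd j f) (x + s2 *\<^sub>R axis j 1 + t2 *\<^sub>R axis i 1)"
    using st1(3) st2' by linarith
  then have eq: "pd j (pd i f) (x + s1 *\<^sub>R axis i 1 + t1 *\<^sub>R axis j 1) = pd i (pd j f) (x + s2 *\<^sub>R axis j 1 + t2 *\<^sub>R axis i 1)"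
    using h by simp
  have "dist (pd j (pd i f) (x + s1 *\<^sub>R axis i 1 + t1 *\<^sub>R axis j 1)) A < \<epsilon>"
    using d1(2) near[OF st1(1,2), of i j] by (simp add: r_def)
  moreover have "dist (pd i (pd j f) (x + s2 *\<^sub>R axis j 1 + t2 *\<^sub>R axis i 1)) B < \<epsilon>"
    using d2(2) near[OF st2(1,2), of j i] by (simp add: r_def)
  ultimately have "\<bar>A - B\<bar> < 2 * \<epsilon>" using eq by (simp add: dist_real_def)
  then show False by (simp add: \<epsilon>_def)
qed

lemma smooth_const[simp]: "smooth_on U (\<lambda>y. c)"
  unfolding smooth_on_def by (simp add: Ck_const)

locale rg =
  fixes U :: "(real^'n::finite) set" and g :: "real^'n \<Rightarrow> real^'n^'n"
  assumes U_open: "open U" and metric: "riemannian_metric U g"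
begin

abbreviation sm where "sm f \<equiv> smooth_on U f"

lemma sm_add[simp]: "sm f \<Longrightarrow> sm h \<Longrightarrow> sm (\<lambda>y. f y + h y)"
  unfolding smooth_on_def using Ck_add[OF U_open] by blast
lemma sm_mult[simp]: "sm f \<Longrightarrow> sm h \<Longrightarrow> sm (\<lambda>y. f y * h y)"
  unfolding smooth_on_def using Ck_mult[OF U_open] by blast
lemma sm_cong: "sm f \<Longrightarrow> (\<And>y. y \<in> U \<Longrightarrow> f y = h y) \<Longrightarrow> sm h"
  unfolding smooth_on_def using Ck_cong[OF U_open] by blast
lemma sm_minus[simp]: "sm f \<Longrightarrow> sm (\<lambda>y. - f y)"
proof -
  assume "sm f"
  then have "sm (\<lambda>y. (- 1) * f y)" by (rule sm_mult[OF smooth_const])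
  then show ?thesis by (rule sm_cong) simp
qed
lemma sm_diff[simp]: "sm f \<Longrightarrow> sm h \<Longrightarrow> sm (\<lambda>y. f y - h y)"
proof -
  assume "sm f" "sm h"
  then have "sm (\<lambda>y. f y + - h y)" by (intro sm_add sm_minus)
  then show ?thesis by (rule sm_cong) simp
qed
lemma sm_sum[simp]: "finite A \<Longrightarrow> (\<And>a. sm (F a)) \<Longrightarrow> sm (\<lambda>y. \<Sum>a\<in>A. F a y)"
  unfolding smooth_on_def using Ck_sum[OF U_open] by blast
lemma sm_prod: "finite A \<Longrightarrow> (\<And>a. sm (F a)) \<Longrightarrow> sm (\<lambda>y. \<Prod>a\<in>A. F a y)"
  unfolding smooth_on_def using Ck_prod[OF U_open] by blast
lemma sm_pd[simp]: "sm f \<Longrightarrow> sm (pd i f)"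
  by (rule smooth_pd)
lemma sm_inverse: "sm f \<Longrightarrow> (\<And>y. y \<in> U \<Longrightarrow> f y \<noteq> 0) \<Longrightarrow> sm (\<lambda>y. inverse (f y))"
  unfolding smooth_on_def using Ck_inverse[OF U_open] smooth_on_def by blast

lemma pdc: "x \<in> U \<Longrightarrow> (\<And>y. y \<in> U \<Longrightarrow> f y = h y) \<Longrightarrow> pd i f x = pd i h x"
  using pd_cong[OF U_open] by blast

lemma pd_add'[simp]: "sm f \<Longrightarrow> sm h \<Longrightarrow> x \<in> U \<Longrightarrow> pd i (\<lambda>y. f y + h y) x = pd i f x + pd i h x"
  by (simp add: pd_add smooth_diff)
lemma pd_diff'[simp]: "sm f \<Longrightarrow> sm h \<Longrightarrow> x \<in> U \<Longrightarrow> pd i (\<lambda>y. f y - h y) x = pd i f x - pd i h x"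
  by (simp add: pd_diff smooth_diff)
lemma pd_mult'[simp]: "sm f \<Longrightarrow> sm h \<Longrightarrow> x \<in> U \<Longrightarrow> pd i (\<lambda>y. f y * h y) x = pd i f x * h x + f x * pd i h x"
  by (simp add: pd_mult smooth_diff)
lemma pd_sum'[simp]: "finite A \<Longrightarrow> (\<And>a. sm (F a)) \<Longrightarrow> x \<in> U \<Longrightarrow> pd i (\<lambda>y. \<Sum>a\<in>A. F a y) x = (\<Sum>a\<in>A. pd i (F a) x)"
  by (rule pd_sum) (auto intro: smooth_diff)
lemma pd_cmult[simp]: "sm f \<Longrightarrow> x \<in> U \<Longrightarrow> pd i (\<lambda>y. c * f y) x = c * pd i f x"
  using pd_mult'[where f="\<lambda>y. c" and h=f and x=x and i=i] by (simp add: pd_const)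
lemma pd_minus[simp]: "sm f \<Longrightarrow> x \<in> U \<Longrightarrow> pd i (\<lambda>y. - f y) x = - pd i f x"
  using pd_cmult[where f=f and x=x and c="-1" and i=i] by simp
lemma pd_const'[simp]: "pd i (\<lambda>y. c) x = 0" by (rule pd_const)
lemma schwarz': "sm f \<Longrightarrow> x \<in> U \<Longrightarrow> pd i (pd j f) x = pd j (pd i f) x"
  using schwarz[OF U_open] by blast

lemma g_sm[simp]: "sm (\<lambda>y. g y $ i $ j)"
  using metric unfolding riemannian_metric_def by blast
lemma gsym: "x \<in> U \<Longrightarrow> g x $ i $ j = g x $ j $ i"
  using metric unfolding riemannian_metric_def by blast
lemma gpos: "x \<in> U \<Longrightarrow> v \<noteq> 0 \<Longrightarrow> (\<Sum>i\<in>UNIV. \<Sum>j\<in>UNIV. v $ i * g x $ i $ j * v $ j) > 0"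
  using metric unfolding riemannian_metric_def by blast

lemma g_det: assumes x: "x \<in> U" shows "det (g x) \<noteq> 0"
proof -
  have "inj ((*v) (g x))"
  proof (subst linear_injective_0)
    show "linear ((*v) (g x))" by (rule matrix_vector_mul_linear)
    show "\<forall>v. g x *v v = 0 \<longrightarrow> v = 0"
    proof (intro allI impI)
      fix v assume "g x *v v = 0"
      then have "\<forall>i. (\<Sum>j\<in>UNIV. g x $ i $ j * v $ j) = 0"
        by (simp add: matrix_vector_mult_def vec_eq_iff)
      moreover have "(\<Sum>i\<in>UNIV. \<Sum>j\<in>UNIV. v $ i * g x $ i $ j * v $ j) = (\<Sum>i\<in>UNIV. v $ i * (\<Sum>j\<in>UNIV. g x $ i $ j * v $ j))"
        by (simp add: sum_distrib_left mult.assoc)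
      ultimately have "(\<Sum>i\<in>UNIV. \<Sum>j\<in>UNIV. v $ i * g x $ i $ j * v $ j) = 0" by simp
      then show "v = 0" using gpos[OF x, of v] by fastforce
    qed
  qed
  then show ?thesis using det_nz_iff_inj[OF matrix_vector_mul_linear, of "g x"]
    by (simp add: matrix_of_matrix_vector_mul)
qed

lemma g_inv: assumes "x \<in> U" shows "g x ** ginv g x = mat 1" "ginv g x ** g x = mat 1"
proof -
  have "invertible (g x)" using g_det[OF assms] invertible_det_nz by blast
  then obtain B where "g x ** B = mat 1 \<and> B ** g x = mat 1" unfolding invertible_def by blast
  then have "g x ** ginv g x = mat 1 \<and> ginv g x ** g x = mat 1"
    unfolding ginv_def matrix_inv_def by (rule someI)
  then show "g x ** ginv g x = mat 1" "ginv g x ** g x = mat 1" by auto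
qed

lemma g_ginv: "x \<in> U \<Longrightarrow> (\<Sum>l\<in>UNIV. g x $ i $ l * ginv g x $ l $ j) = (if i = j then 1 else 0)"
  using g_inv(1)[of x] by (simp add: matrix_matrix_mult_def vec_eq_iff mat_def)

lemma ginv_g: "x \<in> U \<Longrightarrow> (\<Sum>l\<in>UNIV. ginv g x $ i $ l * g x $ l $ j) = (if i = j then 1 else 0)"
  using g_inv(2)[of x] by (simp add: matrix_matrix_mult_def vec_eq_iff mat_def)

end

lemma mm_diff_left: "(A - B) ** C = A ** C - B ** (C :: real^'n::finite^'n)"
  by (vector matrix_matrix_mult_def sum_subtractf[symmetric] field_simps)
lemma mm_diff_right: "C ** (A - B) = C ** A - C ** (B :: real^'n::finite^'n)"
  by (vector matrix_matrix_mult_def sum_subtractf[symmetric] field_simps)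
lemma mm_add_left: "(A + B) ** C = A ** C + B ** (C :: real^'n::finite^'n)"
  by (vector matrix_matrix_mult_def sum.distrib[symmetric] field_simps)
lemma mm_add_right: "C ** (A + B) = C ** A + C ** (B :: real^'n::finite^'n)"
  by (rule matrix_add_ldistrib)
lemma mm_neg_left: "(- A) ** C = - (A ** (C :: real^'n::finite^'n))"
  by (vector matrix_matrix_mult_def sum_negf[symmetric])
lemma mm_neg_right: "C ** (- A) = - (C ** (A :: real^'n::finite^'n))"
  by (vector matrix_matrix_mult_def sum_negf[symmetric])

lemmas mm_simps = mm_diff_left mm_diff_right mm_add_left mm_add_right mm_neg_left mm_neg_right matrix_mul_assoc

lemma sm_det: "(\<And>r c. smooth_on U (\<lambda>y. M y $ r $ c)) \<Longrightarrow> open U \<Longrightarrow> smooth_on U (\<lambda>y. det (M y :: real^'n::finite^'n))"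
  unfolding det_def smooth_on_def
  by (intro allI Ck_sum Ck_mult Ck_prod Ck_const finite_permutations) auto

definition mpd :: "'n::finite \<Rightarrow> (real^'n \<Rightarrow> real^'n^'n) \<Rightarrow> real^'n \<Rightarrow> real^'n^'n" where
  "mpd i M x = (\<chi> r c. pd i (\<lambda>y. M y $ r $ c) x)"

context rg
begin

definition msm :: "(real^'n \<Rightarrow> real^'n^'n) \<Rightarrow> bool" where
  "msm M \<longleftrightarrow> (\<forall>r c. sm (\<lambda>y. M y $ r $ c))"

lemma msm_add[simp]: "msm M \<Longrightarrow> msm N \<Longrightarrow> msm (\<lambda>y. M y + N y)"
  unfolding msm_def by simp
lemma msm_diff[simp]: "msm M \<Longrightarrow> msm N \<Longrightarrow> msm (\<lambda>y. M y - N y)"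
  unfolding msm_def by simp
lemma msm_neg[simp]: "msm M \<Longrightarrow> msm (\<lambda>y. - M y)"
  unfolding msm_def by simp
lemma msm_mult[simp]: "msm M \<Longrightarrow> msm N \<Longrightarrow> msm (\<lambda>y. M y ** N y)"
  unfolding msm_def matrix_matrix_mult_def by simp
lemma msm_transpose[simp]: "msm M \<Longrightarrow> msm (\<lambda>y. transpose (M y))"
  unfolding msm_def transpose_def by simp
lemma msm_mpd[simp]: "msm M \<Longrightarrow> msm (mpd i M)"
  unfolding msm_def mpd_def by simp
lemma msm_const[simp]: "msm (\<lambda>y. C)"
  unfolding msm_def by simp
lemma msm_entry[simp]: "msm M \<Longrightarrow> sm (\<lambda>y. M y $ r $ c)"
  unfolding msm_def by simp

lemma mpd_add[simp]: "msm M \<Longrightarrow> msm N \<Longrightarrow> x \<in> U \<Longrightarrow> mpd i (\<lambda>y. M y + N y) x = mpd i M x + mpd i N x"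
  unfolding mpd_def by (simp add: vec_eq_iff)
lemma mpd_diff[simp]: "msm M \<Longrightarrow> msm N \<Longrightarrow> x \<in> U \<Longrightarrow> mpd i (\<lambda>y. M y - N y) x = mpd i M x - mpd i N x"
  unfolding mpd_def by (simp add: vec_eq_iff)
lemma mpd_neg[simp]: "msm M \<Longrightarrow> x \<in> U \<Longrightarrow> mpd i (\<lambda>y. - M y) x = - mpd i M x"
  unfolding mpd_def by (simp add: vec_eq_iff)
lemma mpd_mult[simp]: "msm M \<Longrightarrow> msm N \<Longrightarrow> x \<in> U \<Longrightarrow> mpd i (\<lambda>y. M y ** N y) x = mpd i M x ** N x + M x ** mpd i N x"
  unfolding mpd_def matrix_matrix_mult_def by (simp add: vec_eq_iff sum.distrib)
lemma mpd_transpose[simp]: "msm M \<Longrightarrow> x \<in> U \<Longrightarrow> mpd i (\<lambda>y. transpose (M y)) x = transpose (mpd i M x)"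
  unfolding mpd_def transpose_def by (simp add: vec_eq_iff)
lemma mpd_const[simp]: "mpd i (\<lambda>y. C) x = 0"
  unfolding mpd_def by (simp add: vec_eq_iff)
lemma mpd_cong: "x \<in> U \<Longrightarrow> (\<And>y. y \<in> U \<Longrightarrow> M y = N y) \<Longrightarrow> mpd i M x = mpd i N x"
proof -
  assume a: "x \<in> U" "\<And>y. y \<in> U \<Longrightarrow> M y = N y"
  show ?thesis unfolding mpd_def vec_eq_iff
    by (auto intro!: pdc[OF a(1)] simp: a(2))
qed
lemma mpd_schwarz: "msm M \<Longrightarrow> x \<in> U \<Longrightarrow> mpd i (mpd j M) x = mpd j (mpd i M) x"
  unfolding mpd_def by (simp add: vec_eq_iff schwarz')

lemma g_msm[simp]: "msm g"
  unfolding msm_def by simp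

lemma g_transpose: "x \<in> U \<Longrightarrow> transpose (g x) = g x"
  by (vector transpose_def gsym)

lemma ginv_sym_mat: assumes x: "x \<in> U" shows "transpose (ginv g x) = ginv g x"
proof -
  have "g x ** transpose (ginv g x) = mat 1"
    using arg_cong[OF g_inv(2)[OF x], of transpose] by (simp add: matrix_transpose_mul g_transpose[OF x])
  then have "ginv g x ** (g x ** transpose (ginv g x)) = ginv g x" by simp
  then show ?thesis by (simp add: matrix_mul_assoc g_inv(2)[OF x])
qed

lemma ginv_sym: "x \<in> U \<Longrightarrow> ginv g x $ i $ j = ginv g x $ j $ i"
  using ginv_sym_mat[of x] by (metis transpose_def vec_lambda_beta)

lemma ginv_cramer: assumes x: "x \<in> U"
  shows "ginv g x $ k $ j = det (\<chi> r c. if c = k then axis j 1 $ r else g x $ r $ c) / det (g x)"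
proof -
  have "g x *v (ginv g x *v axis j 1) = axis j 1"
    by (simp add: matrix_vector_mul_assoc g_inv(1)[OF x])
  then have "ginv g x *v axis j 1 = (\<chi> k. det(\<chi> r c. if c = k then axis j 1 $ r else g x $ r $ c) / det (g x))"
    using cramer[OF g_det[OF x]] by blast
  then have "(ginv g x *v axis j 1) $ k = det(\<chi> r c. if c = k then axis j 1 $ r else g x $ r $ c) / det (g x)" by simp
  moreover have "(ginv g x *v axis j 1) $ k = ginv g x $ k $ j"
    by (simp add: matrix_vector_mult_def axis_def if_distrib cong: if_cong)
  ultimately show ?thesis by simp
qed

lemma ginv_sm[simp]: "sm (\<lambda>y. ginv g y $ k $ j)"
proof (rule sm_cong)
  have a: "sm (\<lambda>y. det (\<chi> r c. if c = k then axis j 1 $ r else g y $ r $ c))"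
  proof (rule sm_det[OF _ U_open])
    fix r c show "sm (\<lambda>y. (\<chi> r c. if c = k then axis j 1 $ r else g y $ r $ c) $ r $ c)"
      by (cases "c = k") simp_all
  qed
  have b: "sm (\<lambda>y. inverse (det (g y)))"
    by (rule sm_inverse) (auto intro!: sm_det U_open simp: g_det)
  show "sm (\<lambda>y. det (\<chi> r c. if c = k then axis j 1 $ r else g y $ r $ c) * inverse (det (g y)))"
    using a b by simp
  show "det (\<chi> r c. if c = k then axis j 1 $ r else g y $ r $ c) * inverse (det (g y)) = ginv g y $ k $ j"
    if "y \<in> U" for y using ginv_cramer[OF that] by (simp add: divide_inverse)
qed

lemma ginv_msm[simp]: "msm (ginv g)"
  unfolding msm_def by simp

lemma sm_divc[simp]: "sm f \<Longrightarrow> sm (\<lambda>y. f y / c)"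
proof -
  assume "sm f" then have "sm (\<lambda>y. inverse c * f y)" by (intro sm_mult) simp_all
  then show ?thesis by (rule sm_cong) (simp add: divide_inverse mult.commute)
qed

lemma pd_divc[simp]: "sm f \<Longrightarrow> x \<in> U \<Longrightarrow> pd i (\<lambda>y. f y / c) x = pd i f x / c"
proof -
  assume a: "sm f" "x \<in> U"
  have "pd i (\<lambda>y. f y / c) x = pd i (\<lambda>y. inverse c * f y) x" by (rule pdc[OF a(2)]) (simp add: divide_inverse mult.commute)
  also have "\<dots> = inverse c * pd i f x" using a by simp
  finally show ?thesis by (simp add: divide_inverse mult.commute)
qed

lemma pd_gsym: "x \<in> U \<Longrightarrow> pd a (\<lambda>y. g y $ i $ j) x = pd a (\<lambda>y. g y $ j $ i) x"
  by (rule pdc) (auto simp: gsym)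

lemma chr_sm[simp]: "sm (christoffel g k i j)"
  unfolding christoffel_def by simp

definition Gam :: "'n \<Rightarrow> real^'n \<Rightarrow> real^'n^'n" where
  "Gam a x = (\<chi> l k. christoffel g l a k x)"

lemma Gam_msm[simp]: "msm (Gam a)"
  unfolding msm_def Gam_def by simp

lemma Gam_entry[simp]: "Gam a x $ l $ k = christoffel g l a k x"
  by (simp add: Gam_def)

lemma chr_sym: assumes x: "x \<in> U" shows "christoffel g k i j x = christoffel g k j i x"
  unfolding christoffel_def using pd_gsym[OF x, of _ i j] gsym[OF x, of i j]
  by (simp add: algebra_simps)

lemma sum_delta_mult[simp]: "(\<Sum>p\<in>UNIV. (if (m::'n) = p then 1 else 0) * (E p :: real)) = E m"
  by (subst sum.cong[OF refl, of _ _ "\<lambda>p. if m = p then E p else 0"]) auto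

lemma chr_low: assumes x: "x \<in> U"
  shows "(\<Sum>l\<in>UNIV. g x $ m $ l * christoffel g l i j x) =
    (pd i (\<lambda>y. g y $ j $ m) x + pd j (\<lambda>y. g y $ i $ m) x - pd m (\<lambda>y. g y $ i $ j) x) / 2"
proof -
  define E where "E p = pd i (\<lambda>y. g y $ j $ p) x + pd j (\<lambda>y. g y $ i $ p) x - pd p (\<lambda>y. g y $ i $ j) x" for p
  have "(\<Sum>l\<in>UNIV. g x $ m $ l * christoffel g l i j x) = (\<Sum>l\<in>UNIV. \<Sum>p\<in>UNIV. g x $ m $ l * ginv g x $ l $ p * E p) / 2"
    unfolding christoffel_def E_def by (simp add: sum_distrib_left sum_divide_distrib mult_ac)
  also have "\<dots> = (\<Sum>p\<in>UNIV. \<Sum>l\<in>UNIV. g x $ m $ l * ginv g x $ l $ p * E p) / 2"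
    by (subst sum.swap) (rule refl)
  also have "\<dots> = (\<Sum>p\<in>UNIV. (\<Sum>l\<in>UNIV. g x $ m $ l * ginv g x $ l $ p) * E p) / 2"
    by (simp add: sum_distrib_right)
  also have "\<dots> = E m / 2" by (simp add: g_ginv[OF x])
  finally show ?thesis by (simp add: E_def)
qed

lemma g_compat: assumes x: "x \<in> U"
  shows "pd a (\<lambda>y. g y $ i $ j) x = (\<Sum>l\<in>UNIV. christoffel g l a i x * g x $ l $ j) + (\<Sum>l\<in>UNIV. christoffel g l a j x * g x $ i $ l)"
proof -
  have "(\<Sum>l\<in>UNIV. christoffel g l a i x * g x $ l $ j) = (\<Sum>l\<in>UNIV. g x $ j $ l * christoffel g l a i x)"
    by (rule sum.cong) (auto simp: gsym[OF x, of _ j])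
  also have "\<dots> = (pd a (\<lambda>y. g y $ i $ j) x + pd i (\<lambda>y. g y $ a $ j) x - pd j (\<lambda>y. g y $ a $ i) x) / 2"
    by (rule chr_low[OF x])
  finally have 1: "(\<Sum>l\<in>UNIV. christoffel g l a i x * g x $ l $ j) = \<dots>" .
  have 2: "(\<Sum>l\<in>UNIV. christoffel g l a j x * g x $ i $ l) = (pd a (\<lambda>y. g y $ j $ i) x + pd j (\<lambda>y. g y $ a $ i) x - pd i (\<lambda>y. g y $ a $ j) x) / 2"
    using chr_low[OF x, of i a j] by (simp add: mult.commute)
  show ?thesis unfolding 1 2 using pd_gsym[OF x, of a i j] by (simp add: field_simps)
qed

lemma g_compat_mat: "x \<in> U \<Longrightarrow> mpd a g x = transpose (Gam a x) ** g x + g x ** Gam a x"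
  by (simp add: vec_eq_iff mpd_def matrix_matrix_mult_def transpose_def g_compat mult.commute)

lemma ginv_deriv_mat: assumes x: "x \<in> U"
  shows "mpd a (ginv g) x = - (ginv g x ** transpose (Gam a x)) - Gam a x ** ginv g x"
proof -
  have "mpd a (\<lambda>y. ginv g y ** g y) x = mpd a (\<lambda>y. mat 1) x"
    by (rule mpd_cong[OF x]) (simp add: g_inv)
  then have "mpd a (ginv g) x ** g x + ginv g x ** mpd a g x = 0" using x by simp
  then have "(mpd a (ginv g) x ** g x + ginv g x ** mpd a g x) ** ginv g x = 0" by simp
  moreover have "mpd a (ginv g) x ** g x ** ginv g x = mpd a (ginv g) x"
    by (simp add: matrix_mul_assoc[symmetric] g_inv[OF x])
  ultimately have "mpd a (ginv g) x + ginv g x ** mpd a g x ** ginv g x = 0"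
    by (simp add: mm_simps)
  then have "mpd a (ginv g) x = - (ginv g x ** mpd a g x ** ginv g x)"
    by (simp add: eq_neg_iff_add_eq_0)
  also have "\<dots> = - (ginv g x ** transpose (Gam a x)) - Gam a x ** ginv g x"
  proof -
    have "ginv g x ** mpd a g x ** ginv g x = ginv g x ** transpose (Gam a x) ** (g x ** ginv g x) + (ginv g x ** g x) ** Gam a x ** ginv g x"
      by (simp add: g_compat_mat[OF x] mm_simps)
    then show ?thesis by (simp add: g_inv[OF x])
  qed
  finally show ?thesis .
qed

lemma ginv_deriv: assumes x: "x \<in> U"
  shows "pd a (\<lambda>y. ginv g y $ i $ j) x = - (\<Sum>l\<in>UNIV. ginv g x $ i $ l * christoffel g j a l x) - (\<Sum>l\<in>UNIV. christoffel g i a l x * ginv g x $ l $ j)"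
  using arg_cong[OF ginv_deriv_mat[OF x, of a], of "\<lambda>M. M $ i $ j"]
  by (simp add: mpd_def matrix_matrix_mult_def transpose_def)

end

context rg
begin

definition Rm :: "'n \<Rightarrow> 'n \<Rightarrow> real^'n \<Rightarrow> real^'n^'n" where
  "Rm i j x = mpd i (Gam j) x - mpd j (Gam i) x + Gam i x ** Gam j x - Gam j x ** Gam i x"

lemma Rm_msm[simp]: "msm (Rm i j)"
proof -
  have "msm (\<lambda>x. mpd i (Gam j) x - mpd j (Gam i) x + Gam i x ** Gam j x - Gam j x ** Gam i x)" by simp
  then show ?thesis unfolding Rm_def[abs_def] .
qed

lemma Rm_anti: "Rm j i x = - Rm i j x"
  unfolding Rm_def by (simp add: algebra_simps)

definition W :: "'n \<Rightarrow> 'n \<Rightarrow> 'n \<Rightarrow> real^'n \<Rightarrow> real^'n^'n" where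
  "W a i j x = mpd a (Rm i j) x + Gam a x ** Rm i j x - Rm i j x ** Gam a x"

lemma mpd_Rm: "x \<in> U \<Longrightarrow> mpd a (Rm i j) x = mpd a (mpd i (Gam j)) x - mpd a (mpd j (Gam i)) x
   + (mpd a (Gam i) x ** Gam j x + Gam i x ** mpd a (Gam j) x)
   - (mpd a (Gam j) x ** Gam i x + Gam j x ** mpd a (Gam i) x)"
  unfolding Rm_def[abs_def] by simp

lemma bianchi_mat: assumes x: "x \<in> U" shows "W a i j x + W i j a x + W j a i x = 0"
proof -
  have s1: "mpd a (mpd i (Gam j)) x = mpd i (mpd a (Gam j)) x" by (rule mpd_schwarz[OF _ x]) simp
  have s2: "mpd j (mpd a (Gam i)) x = mpd a (mpd j (Gam i)) x" by (rule mpd_schwarz[OF _ x]) simp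
  have s3: "mpd i (mpd j (Gam a)) x = mpd j (mpd i (Gam a)) x" by (rule mpd_schwarz[OF _ x]) simp
  show ?thesis
    unfolding W_def mpd_Rm[OF x] Rm_def s1 s2 s3
    by (simp add: mm_simps algebra_simps)
qed

end

context rg
begin

lemma pd_chr_sym: "x \<in> U \<Longrightarrow> pd a (christoffel g l i j) x = pd a (christoffel g l j i) x"
  by (rule pdc) (auto simp: chr_sym)

lemma ricci_sm[simp]: "sm (ricci g k j)"
  unfolding ricci_def by simp

lemma ricci_Rm: assumes x: "x \<in> U" shows "ricci g k j x = (\<Sum>i\<in>UNIV. Rm i j x $ i $ k)"
  unfolding ricci_def Rm_def mpd_def matrix_matrix_mult_def
  using x by (simp add: sum.distrib sum_subtractf chr_sym[OF x] pd_chr_sym[OF x])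

definition E :: "'n \<Rightarrow> 'n \<Rightarrow> 'n \<Rightarrow> 'n \<Rightarrow> 'n \<Rightarrow> real^'n \<Rightarrow> real" where
  "E a i j l k x = W a i j x $ l $ k - (\<Sum>m\<in>UNIV. christoffel g m a i x * Rm m j x $ l $ k)
     - (\<Sum>m\<in>UNIV. christoffel g m a j x * Rm i m x $ l $ k)"

lemma E_cyc: assumes x: "x \<in> U" shows "E a i j l k x + E i j a l k x + E j a i l k x = 0"
proof -
  have w: "W a i j x $ l $ k + W i j a x $ l $ k + W j a i x $ l $ k = 0"
    using arg_cong[OF bianchi_mat[OF x, of a i j], of "\<lambda>M. M $ l $ k"] by simp
  show ?thesis unfolding E_def using w
    by (simp add: Rm_anti[of j] Rm_anti[of i] Rm_anti[of a] chr_sym[OF x] sum_negf algebra_simps)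
qed

definition nab2 :: "('n \<Rightarrow> 'n \<Rightarrow> real^'n \<Rightarrow> real) \<Rightarrow> 'n \<Rightarrow> 'n \<Rightarrow> 'n \<Rightarrow> real^'n \<Rightarrow> real" where
  "nab2 T a i j x = pd a (T i j) x - (\<Sum>l\<in>UNIV. christoffel g l a i x * T l j x) - (\<Sum>l\<in>UNIV. christoffel g l a j x * T i l x)"

lemma W_entry: "x \<in> U \<Longrightarrow> W a i j x $ l $ k = pd a (\<lambda>y. Rm i j y $ l $ k) x
   + (\<Sum>m\<in>UNIV. christoffel g l a m x * Rm i j x $ m $ k) - (\<Sum>m\<in>UNIV. Rm i j x $ l $ m * christoffel g m a k x)"
  unfolding W_def by (simp add: mpd_def matrix_matrix_mult_def)

lemma T1: assumes x: "x \<in> U" shows "(\<Sum>i\<in>UNIV. E a i j i k x) = nab2 (ricci g) a k j x"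
proof -
  have p: "pd a (ricci g k j) x = (\<Sum>i\<in>UNIV. pd a (\<lambda>y. Rm i j y $ i $ k) x)"
  proof -
    have "pd a (ricci g k j) x = pd a (\<lambda>y. \<Sum>i\<in>UNIV. Rm i j y $ i $ k) x"
      by (rule pdc[OF x]) (rule ricci_Rm)
    then show ?thesis using x by simp
  qed
  have c1: "(\<Sum>i\<in>UNIV. \<Sum>m\<in>UNIV. christoffel g i a m x * Rm i j x $ m $ k)
          = (\<Sum>i\<in>UNIV. \<Sum>m\<in>UNIV. christoffel g m a i x * Rm m j x $ i $ k)"
    by (rule sum.swap)
  have c2: "(\<Sum>i\<in>UNIV. \<Sum>m\<in>UNIV. Rm i j x $ i $ m * christoffel g m a k x)
          = (\<Sum>m\<in>UNIV. christoffel g m a k x * ricci g m j x)"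
    by (subst sum.swap) (simp add: ricci_Rm[OF x] sum_distrib_left mult.commute)
  have c3: "(\<Sum>i\<in>UNIV. \<Sum>m\<in>UNIV. christoffel g m a j x * Rm i m x $ i $ k)
          = (\<Sum>m\<in>UNIV. christoffel g m a j x * ricci g k m x)"
    by (subst sum.swap) (simp add: ricci_Rm[OF x] sum_distrib_left)
  show ?thesis
    unfolding E_def W_entry[OF x] nab2_def sum_subtractf sum.distrib p c1 c2 c3 by simp
qed

lemma Rm_fun_anti: "Rm j i = (\<lambda>y. - Rm i j y)"
  by (rule ext) (rule Rm_anti)

lemma E_anti: assumes x: "x \<in> U" shows "E a j i l k x = - E a i j l k x"
proof -
  have "W a j i x = - W a i j x"
    unfolding W_def Rm_fun_anti[of j i] using x by (simp add: mm_simps Rm_anti[of j i])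
  then show ?thesis unfolding E_def
    by (simp add: Rm_anti[of _ i] Rm_anti[of _ j] sum_negf algebra_simps)
qed

lemma T3: assumes x: "x \<in> U" shows "(\<Sum>i\<in>UNIV. E j a i i k x) = - nab2 (ricci g) j k a x"
  using T1[OF x, of j a k] E_anti[OF x, of j a] by (simp add: sum_negf)

definition Amat :: "'n \<Rightarrow> real^'n \<Rightarrow> real^'n^'n" where "Amat i y = g y ** Gam i y"

lemma Amat_msm[simp]: "msm (Amat i)" unfolding Amat_def[abs_def] by simp

lemma Amat_entry: "y \<in> U \<Longrightarrow> Amat j y $ m $ k = (pd j (\<lambda>y. g y $ k $ m) y + pd k (\<lambda>y. g y $ j $ m) y - pd m (\<lambda>y. g y $ j $ k) y) / 2"
  unfolding Amat_def using chr_low[of y m j k] by (simp add: matrix_matrix_mult_def)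

lemma mpdA_entry: assumes x: "x \<in> U"
  shows "mpd i (Amat j) x $ m $ k = (pd i (pd j (\<lambda>y. g y $ k $ m)) x + pd i (pd k (\<lambda>y. g y $ j $ m)) x - pd i (pd m (\<lambda>y. g y $ j $ k)) x) / 2"
proof -
  have "mpd i (Amat j) x $ m $ k = pd i (\<lambda>y. (pd j (\<lambda>y. g y $ k $ m) y + pd k (\<lambda>y. g y $ j $ m) y - pd m (\<lambda>y. g y $ j $ k) y) / 2) x"
    unfolding mpd_def by simp (rule pdc[OF x], simp add: Amat_entry)
  then show ?thesis using x by simp
qed

lemma gRm: assumes x: "x \<in> U"
  shows "g x ** Rm i j x = mpd i (Amat j) x - mpd j (Amat i) x - transpose (Gam i x) ** g x ** Gam j x + transpose (Gam j x) ** g x ** Gam i x"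
proof -
  have "mpd i (Amat j) x = (transpose (Gam i x) ** g x + g x ** Gam i x) ** Gam j x + g x ** mpd i (Gam j) x"
    unfolding Amat_def[abs_def] using x by (simp add: g_compat_mat)
  moreover have "mpd j (Amat i) x = (transpose (Gam j x) ** g x + g x ** Gam j x) ** Gam i x + g x ** mpd j (Gam i) x"
    unfolding Amat_def[abs_def] using x by (simp add: g_compat_mat)
  ultimately show ?thesis unfolding Rm_def by (simp add: mm_simps algebra_simps)
qed

lemma transpose_add': "transpose (A + B) = transpose A + transpose (B::real^'n^'n)"
  by (simp add: vec_eq_iff transpose_def)
lemma transpose_diff': "transpose (A - B) = transpose A - transpose (B::real^'n^'n)"
  by (simp add: vec_eq_iff transpose_def)
lemma transpose_neg': "transpose (- A) = - transpose (A::real^'n^'n)"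
  by (simp add: vec_eq_iff transpose_def)

lemma Rlow_anti: assumes x: "x \<in> U" shows "transpose (g x ** Rm i j x) = - (g x ** Rm i j x)"
proof -
  have d: "transpose (mpd i (Amat j) x - mpd j (Amat i) x) = - (mpd i (Amat j) x - mpd j (Amat i) x)"
    unfolding vec_eq_iff transpose_def using x
    by (simp add: mpdA_entry schwarz' field_simps)
  have t: "transpose (transpose (Gam i x) ** g x ** Gam j x) = transpose (Gam j x) ** g x ** Gam i x"
    by (simp add: matrix_transpose_mul g_transpose[OF x] matrix_mul_assoc)
  show ?thesis unfolding gRm[OF x] using d t
    by (simp add: transpose_add' transpose_diff' transpose_neg' algebra_simps) (simp add: matrix_transpose_mul g_transpose[OF x] matrix_mul_assoc)
qed

end

lemma swap13: "(\<Sum>k\<in>A. \<Sum>a\<in>B. \<Sum>m\<in>C. F k a m) = (\<Sum>m\<in>C. \<Sum>a\<in>B. \<Sum>k\<in>A. (F k a m :: real))"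
proof -
  have "(\<Sum>k\<in>A. \<Sum>a\<in>B. \<Sum>m\<in>C. F k a m) = (\<Sum>k\<in>A. \<Sum>m\<in>C. \<Sum>a\<in>B. F k a m)"
    by (rule sum.cong[OF refl]) (rule sum.swap)
  also have "\<dots> = (\<Sum>m\<in>C. \<Sum>k\<in>A. \<Sum>a\<in>B. F k a m)" by (rule sum.swap)
  also have "\<dots> = (\<Sum>m\<in>C. \<Sum>a\<in>B. \<Sum>k\<in>A. F k a m)"
    by (rule sum.cong[OF refl]) (rule sum.swap)
  finally show ?thesis .
qed

lemma swap312: "(\<Sum>k\<in>A. \<Sum>a\<in>B. \<Sum>m\<in>C. F k a m) = (\<Sum>m\<in>C. \<Sum>k\<in>A. \<Sum>a\<in>B. (F k a m :: real))"
proof -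
  have "(\<Sum>k\<in>A. \<Sum>a\<in>B. \<Sum>m\<in>C. F k a m) = (\<Sum>k\<in>A. \<Sum>m\<in>C. \<Sum>a\<in>B. F k a m)"
    by (rule sum.cong[OF refl]) (rule sum.swap)
  also have "\<dots> = (\<Sum>m\<in>C. \<Sum>k\<in>A. \<Sum>a\<in>B. F k a m)" by (rule sum.swap)
  finally show ?thesis .
qed

context rg
begin

definition P :: "'n \<Rightarrow> 'n \<Rightarrow> real^'n \<Rightarrow> real" where
  "P l j x = (\<Sum>k\<in>UNIV. \<Sum>a\<in>UNIV. ginv g x $ k $ a * Rm j a x $ l $ k)"

lemma P_sm[simp]: "sm (P l j)"
  unfolding P_def[abs_def] by simp

lemma RG_anti: assumes x: "x \<in> U" shows "(Rm j a x ** ginv g x) $ l $ b = - (Rm j a x ** ginv g x) $ b $ l"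
proof -
  define M where "M = g x ** Rm j a x"
  have tM: "transpose M = - M" unfolding M_def by (rule Rlow_anti[OF x])
  define N where "N = ginv g x ** M ** ginv g x"
  have N: "Rm j a x ** ginv g x = N"
    unfolding N_def M_def by (simp add: matrix_mul_assoc g_inv[OF x])
  have "transpose N = - N"
    unfolding N_def
    by (simp add: matrix_transpose_mul tM ginv_sym_mat[OF x] mm_simps)
  then have "transpose N $ b $ l = - N $ b $ l" by simp
  then show ?thesis unfolding N by (simp add: transpose_def)
qed

lemma P_eq: assumes x: "x \<in> U" shows "P l j x = (\<Sum>m\<in>UNIV. ginv g x $ l $ m * ricci g m j x)"
proof -
  have "P l j x = (\<Sum>a\<in>UNIV. \<Sum>k\<in>UNIV. ginv g x $ k $ a * Rm j a x $ l $ k)"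
    unfolding P_def by (rule sum.swap)
  also have "\<dots> = (\<Sum>a\<in>UNIV. (Rm j a x ** ginv g x) $ l $ a)"
    by (simp add: matrix_matrix_mult_def mult.commute)
  also have "\<dots> = (\<Sum>a\<in>UNIV. - (Rm j a x ** ginv g x) $ a $ l)"
    by (rule sum.cong[OF refl]) (rule RG_anti[OF x])
  also have "\<dots> = (\<Sum>a\<in>UNIV. \<Sum>m\<in>UNIV. ginv g x $ l $ m * Rm a j x $ a $ m)"
  proof (rule sum.cong[OF refl])
    fix a
    have "- (Rm j a x ** ginv g x) $ a $ l = (\<Sum>m\<in>UNIV. - (Rm j a x $ a $ m) * ginv g x $ m $ l)"
      by (simp add: matrix_matrix_mult_def sum_negf)
    also have "\<dots> = (\<Sum>m\<in>UNIV. ginv g x $ l $ m * Rm a j x $ a $ m)"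
    proof (rule sum.cong[OF refl])
      fix m show "- (Rm j a x $ a $ m) * ginv g x $ m $ l = ginv g x $ l $ m * Rm a j x $ a $ m"
        using Rm_anti[of j a x] ginv_sym[OF x, of m l] by simp
    qed
    finally show "- (Rm j a x ** ginv g x) $ a $ l = (\<Sum>m\<in>UNIV. ginv g x $ l $ m * Rm a j x $ a $ m)" .
  qed
  also have "\<dots> = (\<Sum>m\<in>UNIV. \<Sum>a\<in>UNIV. ginv g x $ l $ m * Rm a j x $ a $ m)"
    by (rule sum.swap)
  also have "\<dots> = (\<Sum>m\<in>UNIV. ginv g x $ l $ m * ricci g m j x)"
    by (simp add: ricci_Rm[OF x] sum_distrib_left)
  finally show ?thesis .
qed

lemma T2_pt: assumes x: "x \<in> U"
  shows "(\<Sum>k\<in>UNIV. \<Sum>a\<in>UNIV. ginv g x $ k $ a * E i j a i k x)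
     = pd i (P i j) x + (\<Sum>m\<in>UNIV. christoffel g i i m x * P m j x) - (\<Sum>m\<in>UNIV. christoffel g m i j x * P i m x)"
proof -
  define A1 where "A1 = (\<Sum>k\<in>UNIV. \<Sum>a\<in>UNIV. ginv g x $ k $ a * pd i (\<lambda>y. Rm j a y $ i $ k) x)"
  define A2 where "A2 = (\<Sum>k\<in>UNIV. \<Sum>a\<in>UNIV. \<Sum>m\<in>UNIV. christoffel g i i m x * (ginv g x $ k $ a * Rm j a x $ m $ k))"
  define A3 where "A3 = (\<Sum>k\<in>UNIV. \<Sum>a\<in>UNIV. \<Sum>m\<in>UNIV. ginv g x $ k $ a * Rm j a x $ i $ m * christoffel g m i k x)"
  define A4 where "A4 = (\<Sum>k\<in>UNIV. \<Sum>a\<in>UNIV. \<Sum>m\<in>UNIV. christoffel g m i j x * (ginv g x $ k $ a * Rm m a x $ i $ k))"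
  define A5 where "A5 = (\<Sum>k\<in>UNIV. \<Sum>a\<in>UNIV. \<Sum>m\<in>UNIV. ginv g x $ k $ a * christoffel g m i a x * Rm j m x $ i $ k)"
  have pt: "ginv g x $ k $ a * E i j a i k x = ginv g x $ k $ a * pd i (\<lambda>y. Rm j a y $ i $ k) x
     + (\<Sum>m\<in>UNIV. christoffel g i i m x * (ginv g x $ k $ a * Rm j a x $ m $ k))
     - (\<Sum>m\<in>UNIV. ginv g x $ k $ a * Rm j a x $ i $ m * christoffel g m i k x)
     - (\<Sum>m\<in>UNIV. christoffel g m i j x * (ginv g x $ k $ a * Rm m a x $ i $ k))
     - (\<Sum>m\<in>UNIV. ginv g x $ k $ a * christoffel g m i a x * Rm j m x $ i $ k)" for k a
    unfolding E_def W_entry[OF x] by (simp add: sum_distrib_left right_diff_distrib distrib_left mult_ac)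
  have L: "(\<Sum>k\<in>UNIV. \<Sum>a\<in>UNIV. ginv g x $ k $ a * E i j a i k x) = A1 + A2 - A3 - A4 - A5"
    unfolding A1_def A2_def A3_def A4_def A5_def pt by (simp only: sum_subtractf sum.distrib)
  have h2: "A2 = (\<Sum>m\<in>UNIV. christoffel g i i m x * P m j x)"
    unfolding A2_def P_def by (subst swap312) (simp add: sum_distrib_left)
  have h4: "A4 = (\<Sum>m\<in>UNIV. christoffel g m i j x * P i m x)"
    unfolding A4_def P_def by (subst swap312) (simp add: sum_distrib_left)
  have h5: "A5 = (\<Sum>k\<in>UNIV. \<Sum>a\<in>UNIV. \<Sum>l\<in>UNIV. ginv g x $ k $ l * christoffel g a i l x * Rm j a x $ i $ k)"
    unfolding A5_def by (rule sum.cong[OF refl]) (rule sum.swap)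
  have h3: "A3 = (\<Sum>k\<in>UNIV. \<Sum>a\<in>UNIV. \<Sum>l\<in>UNIV. ginv g x $ l $ a * Rm j a x $ i $ k * christoffel g k i l x)"
    unfolding A3_def by (rule swap13)
  have pdP: "pd i (P i j) x = (\<Sum>k\<in>UNIV. \<Sum>a\<in>UNIV. pd i (\<lambda>y. ginv g y $ k $ a) x * Rm j a x $ i $ k) + A1"
    unfolding P_def[abs_def] A1_def using x by (simp add: sum.distrib)
  have B: "(\<Sum>k\<in>UNIV. \<Sum>a\<in>UNIV. pd i (\<lambda>y. ginv g y $ k $ a) x * Rm j a x $ i $ k) = - A5 - A3"
    unfolding h5 h3 ginv_deriv[OF x]
    by (simp add: sum_subtractf sum.distrib sum_distrib_left sum_distrib_right sum_negf algebra_simps)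
  show ?thesis unfolding L pdP B h2[symmetric] h4[symmetric] by simp
qed

end

context rg
begin

definition divRic :: "'n \<Rightarrow> real^'n \<Rightarrow> real" where
  "divRic j x = (\<Sum>a\<in>UNIV. \<Sum>i\<in>UNIV. ginv g x $ a $ i * nab2 (ricci g) a i j x)"

lemma T2: assumes x: "x \<in> U"
  shows "(\<Sum>k\<in>UNIV. \<Sum>a\<in>UNIV. ginv g x $ k $ a * (\<Sum>i\<in>UNIV. E i j a i k x))
     = (\<Sum>i\<in>UNIV. pd i (P i j) x + (\<Sum>m\<in>UNIV. christoffel g i i m x * P m j x) - (\<Sum>m\<in>UNIV. christoffel g m i j x * P i m x))"
proof -
  have "(\<Sum>k\<in>UNIV. \<Sum>a\<in>UNIV. ginv g x $ k $ a * (\<Sum>i\<in>UNIV. E i j a i k x))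
      = (\<Sum>k\<in>UNIV. \<Sum>a\<in>UNIV. \<Sum>i\<in>UNIV. ginv g x $ k $ a * E i j a i k x)"
    by (simp add: sum_distrib_left)
  also have "\<dots> = (\<Sum>i\<in>UNIV. \<Sum>k\<in>UNIV. \<Sum>a\<in>UNIV. ginv g x $ k $ a * E i j a i k x)"
    by (rule swap312)
  finally show ?thesis by (simp add: T2_pt[OF x])
qed

lemma nabP: assumes x: "x \<in> U"
  shows "(\<Sum>i\<in>UNIV. pd i (P i j) x + (\<Sum>m\<in>UNIV. christoffel g i i m x * P m j x) - (\<Sum>m\<in>UNIV. christoffel g m i j x * P i m x))
     = divRic j x"
proof -
  have pdP: "pd i (P i j) x = (\<Sum>p\<in>UNIV. pd i (\<lambda>y. ginv g y $ i $ p) x * ricci g p j x)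
        + (\<Sum>p\<in>UNIV. ginv g x $ i $ p * pd i (ricci g p j) x)" for i
  proof -
    have "pd i (P i j) x = pd i (\<lambda>y. \<Sum>p\<in>UNIV. ginv g y $ i $ p * ricci g p j y) x"
      by (rule pdc[OF x]) (rule P_eq)
    then show ?thesis using x by (simp add: sum.distrib)
  qed
  define S1 where "S1 = (\<Sum>i\<in>UNIV. \<Sum>p\<in>UNIV. ginv g x $ i $ p * pd i (ricci g p j) x)"
  define S2 where "S2 = (\<Sum>i\<in>UNIV. \<Sum>p\<in>UNIV. \<Sum>l\<in>UNIV. ginv g x $ i $ l * christoffel g p i l x * ricci g p j x)"
  define S3 where "S3 = (\<Sum>i\<in>UNIV. \<Sum>p\<in>UNIV. \<Sum>l\<in>UNIV. christoffel g i i l x * ginv g x $ l $ p * ricci g p j x)"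
  define S4 where "S4 = (\<Sum>i\<in>UNIV. \<Sum>m\<in>UNIV. \<Sum>p\<in>UNIV. christoffel g i i m x * ginv g x $ m $ p * ricci g p j x)"
  define S5 where "S5 = (\<Sum>i\<in>UNIV. \<Sum>m\<in>UNIV. \<Sum>p\<in>UNIV. christoffel g m i j x * ginv g x $ i $ p * ricci g p m x)"
  have L: "(\<Sum>i\<in>UNIV. pd i (P i j) x + (\<Sum>m\<in>UNIV. christoffel g i i m x * P m j x) - (\<Sum>m\<in>UNIV. christoffel g m i j x * P i m x))
     = S1 - S2 - S3 + S4 - S5"
    unfolding pdP S1_def S2_def S3_def S4_def S5_def P_eq[OF x] ginv_deriv[OF x]
    by (simp add: sum_subtractf sum.distrib sum_distrib_left sum_distrib_right sum_negf algebra_simps)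
  have h34: "S3 = S4" unfolding S3_def S4_def
    by (rule sum.cong[OF refl]) (rule sum.swap)
  have R: "divRic j x = S1 - S2 - S5"
  proof -
    have e2: "S2 = (\<Sum>a\<in>UNIV. \<Sum>i\<in>UNIV. \<Sum>l\<in>UNIV. ginv g x $ a $ i * christoffel g l a i x * ricci g l j x)"
      unfolding S2_def by (rule sum.cong[OF refl]) (rule sum.swap)
    have e5: "S5 = (\<Sum>a\<in>UNIV. \<Sum>i\<in>UNIV. \<Sum>l\<in>UNIV. christoffel g l a j x * ginv g x $ a $ i * ricci g i l x)"
      unfolding S5_def by (rule sum.cong[OF refl]) (rule sum.swap)
    show ?thesis unfolding divRic_def nab2_def e2 e5 S1_def
      by (simp add: sum_subtractf sum.distrib sum_distrib_left algebra_simps)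
  qed
  show ?thesis unfolding L R h34 by simp
qed

lemma nab_scal: assumes x: "x \<in> U"
  shows "(\<Sum>k\<in>UNIV. \<Sum>a\<in>UNIV. ginv g x $ k $ a * nab2 (ricci g) j k a x) = pd j (scalar_curv g) x"
proof -
  define S1 where "S1 = (\<Sum>k\<in>UNIV. \<Sum>a\<in>UNIV. ginv g x $ k $ a * pd j (ricci g k a) x)"
  define S2 where "S2 = (\<Sum>k\<in>UNIV. \<Sum>a\<in>UNIV. \<Sum>l\<in>UNIV. ginv g x $ k $ a * christoffel g l j k x * ricci g l a x)"
  define S3 where "S3 = (\<Sum>k\<in>UNIV. \<Sum>a\<in>UNIV. \<Sum>l\<in>UNIV. ginv g x $ k $ a * christoffel g l j a x * ricci g k l x)"
  have L: "(\<Sum>k\<in>UNIV. \<Sum>a\<in>UNIV. ginv g x $ k $ a * nab2 (ricci g) j k a x) = S1 - S2 - S3"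
    unfolding nab2_def S1_def S2_def S3_def
    by (simp add: sum_subtractf sum.distrib sum_distrib_left algebra_simps)
  have e2: "S2 = (\<Sum>k\<in>UNIV. \<Sum>a\<in>UNIV. \<Sum>l\<in>UNIV. ginv g x $ l $ a * christoffel g k j l x * ricci g k a x)"
    unfolding S2_def by (rule swap13)
  have e3: "S3 = (\<Sum>k\<in>UNIV. \<Sum>a\<in>UNIV. \<Sum>l\<in>UNIV. ginv g x $ k $ l * christoffel g a j l x * ricci g k a x)"
    unfolding S3_def by (rule sum.cong[OF refl]) (rule sum.swap)
  have "pd j (scalar_curv g) x = S1 - S3 - S2"
    unfolding scalar_curv_def[abs_def] e2 e3 S1_def using x
    by (simp add: ginv_deriv[OF x] sum_subtractf sum.distrib sum_distrib_left sum_distrib_right sum_negf algebra_simps)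
  then show ?thesis unfolding L by simp
qed

lemma contracted_bianchi: assumes x: "x \<in> U" shows "2 * divRic j x = pd j (scalar_curv g) x"
proof -
  have z: "(\<Sum>k\<in>UNIV. \<Sum>a\<in>UNIV. ginv g x $ k $ a * (\<Sum>i\<in>UNIV. E a i j i k x + E i j a i k x + E j a i i k x)) = 0"
    using E_cyc[OF x] by simp
  have d1: "(\<Sum>k\<in>UNIV. \<Sum>a\<in>UNIV. ginv g x $ k $ a * nab2 (ricci g) a k j x) = divRic j x"
    unfolding divRic_def by (subst sum.swap) (simp add: ginv_sym[OF x])
  have "(\<Sum>k\<in>UNIV. \<Sum>a\<in>UNIV. ginv g x $ k $ a * (\<Sum>i\<in>UNIV. E a i j i k x + E i j a i k x + E j a i i k x))
     = (\<Sum>k\<in>UNIV. \<Sum>a\<in>UNIV. ginv g x $ k $ a * nab2 (ricci g) a k j x)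
       + (\<Sum>k\<in>UNIV. \<Sum>a\<in>UNIV. ginv g x $ k $ a * (\<Sum>i\<in>UNIV. E i j a i k x))
       - (\<Sum>k\<in>UNIV. \<Sum>a\<in>UNIV. ginv g x $ k $ a * nab2 (ricci g) j k a x)"
    by (simp add: sum.distrib T1[OF x] T3[OF x] distrib_left sum_subtractf right_diff_distrib)
  then show ?thesis using z d1 T2[OF x] nabP[OF x] nab_scal[OF x] by simp
qed

end

context rg
begin

lemma cov1_sm[simp]: "(\<And>j. sm (\<theta> j)) \<Longrightarrow> sm (cov1 g \<theta> k j)"
  unfolding cov1_def[abs_def] by simp

lemma Rm_entry: "x \<in> U \<Longrightarrow> Rm a k x $ m $ j = pd a (christoffel g m k j) x - pd k (christoffel g m a j) x
   + (\<Sum>l\<in>UNIV. christoffel g m a l x * christoffel g l k j x) - (\<Sum>l\<in>UNIV. christoffel g m k l x * christoffel g l a j x)"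
  unfolding Rm_def by (simp add: mpd_def matrix_matrix_mult_def)

lemma ricci_identity: assumes x: "x \<in> U" and th: "\<And>j. sm (\<theta> j)"
  shows "cov2 g \<theta> a k j x - cov2 g \<theta> k a j x = - (\<Sum>m\<in>UNIV. Rm a k x $ m $ j * \<theta> m x)"
proof -
  have pa: "pd a (cov1 g \<theta> k j) x = pd a (pd k (\<theta> j)) x
      - (\<Sum>l\<in>UNIV. pd a (christoffel g l k j) x * \<theta> l x + christoffel g l k j x * pd a (\<theta> l) x)" for a k j
    unfolding cov1_def[abs_def] using x th by simp
  have sw1: "(\<Sum>m\<in>UNIV. \<Sum>l\<in>UNIV. christoffel g m a l x * christoffel g l k j x * \<theta> m x)
     = (\<Sum>l\<in>UNIV. \<Sum>m\<in>UNIV. christoffel g m a l x * christoffel g l k j x * \<theta> m x)" by (rule sum.swap)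
  have sw2: "(\<Sum>m\<in>UNIV. \<Sum>l\<in>UNIV. christoffel g m k l x * christoffel g l a j x * \<theta> m x)
     = (\<Sum>l\<in>UNIV. \<Sum>m\<in>UNIV. christoffel g m k l x * christoffel g l a j x * \<theta> m x)" by (rule sum.swap)
  have R: "(\<Sum>m\<in>UNIV. Rm a k x $ m $ j * \<theta> m x) =
      (\<Sum>m\<in>UNIV. pd a (christoffel g m k j) x * \<theta> m x) - (\<Sum>m\<in>UNIV. pd k (christoffel g m a j) x * \<theta> m x)
     + (\<Sum>l\<in>UNIV. \<Sum>m\<in>UNIV. christoffel g m a l x * christoffel g l k j x * \<theta> m x)
     - (\<Sum>l\<in>UNIV. \<Sum>m\<in>UNIV. christoffel g m k l x * christoffel g l a j x * \<theta> m x)"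
    unfolding Rm_entry[OF x] sw1[symmetric] sw2[symmetric]
    by (simp add: sum_subtractf sum.distrib sum_distrib_right sum_distrib_left algebra_simps)
  show ?thesis
    unfolding R cov2_def pa unfolding cov1_def
    using x th by (simp add: schwarz'[of "\<theta> j" x a k] chr_sym[OF x, of _ a k] sum_subtractf sum.distrib
        sum_distrib_left algebra_simps)
qed

lemma ricci_identity_contr: assumes x: "x \<in> U" and th: "\<And>j. sm (\<theta> j)"
  shows "(\<Sum>a\<in>UNIV. \<Sum>i\<in>UNIV. ginv g x $ a $ i * (cov2 g \<theta> a j i x - cov2 g \<theta> j a i x)) = ric_sharp g \<theta> j x"
proof -
  have "(\<Sum>a\<in>UNIV. \<Sum>i\<in>UNIV. ginv g x $ a $ i * (cov2 g \<theta> a j i x - cov2 g \<theta> j a i x))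
      = (\<Sum>a\<in>UNIV. \<Sum>i\<in>UNIV. \<Sum>m\<in>UNIV. \<theta> m x * (ginv g x $ i $ a * Rm j a x $ m $ i))"
  proof (intro sum.cong refl)
    fix a i
    show "ginv g x $ a $ i * (cov2 g \<theta> a j i x - cov2 g \<theta> j a i x) = (\<Sum>m\<in>UNIV. \<theta> m x * (ginv g x $ i $ a * Rm j a x $ m $ i))"
      unfolding ricci_identity[OF x th]
      by (simp add: Rm_anti[of a j] sum_distrib_left sum_negf ginv_sym[OF x, of a i] mult_ac)
  qed
  also have "\<dots> = (\<Sum>m\<in>UNIV. \<theta> m x * P m j x)"
    unfolding P_def by (subst swap13) (simp add: sum_distrib_left)
  also have "\<dots> = (\<Sum>m\<in>UNIV. \<Sum>p\<in>UNIV. \<theta> m x * ginv g x $ m $ p * ricci g p j x)"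
    by (simp add: P_eq[OF x] sum_distrib_left mult.assoc)
  also have "\<dots> = ric_sharp g \<theta> j x"
    unfolding ric_sharp_def
  proof (subst sum.swap, intro sum.cong refl)
    fix m p show "\<theta> m x * ginv g x $ m $ p * ricci g p j x = ginv g x $ p $ m * \<theta> m x * ricci g p j x"
      using ginv_sym[OF x, of m p] by simp
  qed
  finally show ?thesis .
qed

lemma contr_cov2: assumes x: "x \<in> U" and th: "\<And>j. sm (\<theta> j)"
  shows "(\<Sum>a\<in>UNIV. \<Sum>i\<in>UNIV. ginv g x $ a $ i * cov2 g \<theta> j a i x)
     = pd j (\<lambda>y. \<Sum>a\<in>UNIV. \<Sum>i\<in>UNIV. ginv g y $ a $ i * cov1 g \<theta> a i y) x"
proof -
  define S1 where "S1 = (\<Sum>a\<in>UNIV. \<Sum>i\<in>UNIV. ginv g x $ a $ i * pd j (cov1 g \<theta> a i) x)"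
  define S2 where "S2 = (\<Sum>a\<in>UNIV. \<Sum>i\<in>UNIV. \<Sum>l\<in>UNIV. ginv g x $ a $ i * christoffel g l j a x * cov1 g \<theta> l i x)"
  define S3 where "S3 = (\<Sum>a\<in>UNIV. \<Sum>i\<in>UNIV. \<Sum>l\<in>UNIV. ginv g x $ a $ i * christoffel g l j i x * cov1 g \<theta> a l x)"
  have L: "(\<Sum>a\<in>UNIV. \<Sum>i\<in>UNIV. ginv g x $ a $ i * cov2 g \<theta> j a i x) = S1 - S2 - S3"
    unfolding cov2_def S1_def S2_def S3_def
    by (simp add: sum_subtractf sum.distrib sum_distrib_left algebra_simps)
  have e2: "S2 = (\<Sum>a\<in>UNIV. \<Sum>i\<in>UNIV. \<Sum>l\<in>UNIV. ginv g x $ l $ i * christoffel g a j l x * cov1 g \<theta> a i x)"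
    unfolding S2_def by (rule swap13)
  have e3: "S3 = (\<Sum>a\<in>UNIV. \<Sum>i\<in>UNIV. \<Sum>l\<in>UNIV. ginv g x $ a $ l * christoffel g i j l x * cov1 g \<theta> a i x)"
    unfolding S3_def by (rule sum.cong[OF refl]) (rule sum.swap)
  have "pd j (\<lambda>y. \<Sum>a\<in>UNIV. \<Sum>i\<in>UNIV. ginv g y $ a $ i * cov1 g \<theta> a i y) x = S1 - S3 - S2"
    unfolding e2 e3 S1_def using x th
    by (simp add: ginv_deriv[OF x] sum_subtractf sum.distrib sum_distrib_left sum_distrib_right sum_negf algebra_simps)
  then show ?thesis unfolding L by simp
qed

end

locale rgx = rg U g for U :: "(real^'n::finite) set" and g +
  fixes \<xi> :: "real^'n \<Rightarrow> real^'n"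
  assumes xi_sm[simp]: "\<And>i. sm (\<lambda>x. \<xi> x $ i)"
begin

abbreviation "\<theta> \<equiv> flat g \<xi>"

lemma theta_sm[simp]: "sm (\<theta> j)"
  unfolding flat_def[abs_def] by simp

lemma cov1_flat: assumes x: "x \<in> U"
  shows "cov1 g \<theta> a i x = (\<Sum>k\<in>UNIV. g x $ i $ k * (pd a (\<lambda>y. \<xi> y $ k) x + (\<Sum>l\<in>UNIV. christoffel g k a l x * \<xi> x $ l)))"
proof -
  have sw1: "(\<Sum>l\<in>UNIV. \<Sum>k\<in>UNIV. christoffel g l a i x * g x $ l $ k * \<xi> x $ k)
      = (\<Sum>k\<in>UNIV. \<Sum>l\<in>UNIV. christoffel g l a i x * g x $ l $ k * \<xi> x $ k)" by (rule sum.swap)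
  have sw2: "(\<Sum>k\<in>UNIV. \<Sum>l\<in>UNIV. g x $ i $ k * christoffel g k a l x * \<xi> x $ l)
      = (\<Sum>l\<in>UNIV. \<Sum>k\<in>UNIV. g x $ i $ k * christoffel g k a l x * \<xi> x $ l)" by (rule sum.swap)
  have "cov1 g \<theta> a i x = (\<Sum>k\<in>UNIV. \<Sum>l\<in>UNIV. christoffel g l a i x * g x $ l $ k * \<xi> x $ k)
     + (\<Sum>k\<in>UNIV. \<Sum>l\<in>UNIV. christoffel g l a k x * g x $ i $ l * \<xi> x $ k)
     + (\<Sum>k\<in>UNIV. g x $ i $ k * pd a (\<lambda>y. \<xi> y $ k) x)
     - (\<Sum>l\<in>UNIV. \<Sum>k\<in>UNIV. christoffel g l a i x * g x $ l $ k * \<xi> x $ k)"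
    unfolding cov1_def flat_def[abs_def] using x
    by (simp add: g_compat[OF x] sum.distrib sum_distrib_left sum_distrib_right algebra_simps)
  also have "\<dots> = (\<Sum>k\<in>UNIV. \<Sum>l\<in>UNIV. g x $ i $ k * christoffel g k a l x * \<xi> x $ l)
     + (\<Sum>k\<in>UNIV. g x $ i $ k * pd a (\<lambda>y. \<xi> y $ k) x)"
    unfolding sw1 sw2 by (simp add: mult_ac)
  also have "\<dots> = (\<Sum>k\<in>UNIV. g x $ i $ k * (pd a (\<lambda>y. \<xi> y $ k) x + (\<Sum>l\<in>UNIV. christoffel g k a l x * \<xi> x $ l)))"
    by (simp add: sum.distrib sum_distrib_left distrib_left mult_ac)
  finally show ?thesis .
qed

lemma ginv_g_contract: assumes x: "x \<in> U"
  shows "(\<Sum>i\<in>UNIV. ginv g x $ a $ i * (\<Sum>k\<in>UNIV. g x $ i $ k * F k)) = F a"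
proof -
  have "(\<Sum>i\<in>UNIV. ginv g x $ a $ i * (\<Sum>k\<in>UNIV. g x $ i $ k * F k)) = (\<Sum>i\<in>UNIV. \<Sum>k\<in>UNIV. ginv g x $ a $ i * g x $ i $ k * F k)"
    by (simp add: sum_distrib_left mult.assoc)
  also have "\<dots> = (\<Sum>k\<in>UNIV. \<Sum>i\<in>UNIV. ginv g x $ a $ i * g x $ i $ k * F k)" by (rule sum.swap)
  also have "\<dots> = (\<Sum>k\<in>UNIV. (\<Sum>i\<in>UNIV. ginv g x $ a $ i * g x $ i $ k) * F k)" by (simp add: sum_distrib_right)
  also have "\<dots> = F a" by (simp add: ginv_g[OF x])
  finally show ?thesis .
qed

lemma div_eq: assumes x: "x \<in> U"
  shows "divergence g \<xi> x = (\<Sum>a\<in>UNIV. \<Sum>i\<in>UNIV. ginv g x $ a $ i * cov1 g \<theta> a i x)"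
  unfolding cov1_flat[OF x] ginv_g_contract[OF x] divergence_def by (simp add: sum.distrib)

lemma theta_contract: "x \<in> U \<Longrightarrow> (\<Sum>i\<in>UNIV. ginv g x $ a $ i * \<theta> i x) = \<xi> x $ a"
  unfolding flat_def by (rule ginv_g_contract)

lemma theta_xi: "(\<Sum>j\<in>UNIV. \<theta> j x * \<xi> x $ j) = sq_length g \<xi> x"
  unfolding flat_def sq_length_def
  by (simp add: sum_distrib_right sum_distrib_left mult_ac)

lemma lie_eq: assumes x: "x \<in> U"
  shows "lie_metric g \<xi> i j x = cov1 g \<theta> i j x + cov1 g \<theta> j i x"
proof -
  have sw1: "(\<Sum>k\<in>UNIV. \<Sum>l\<in>UNIV. \<xi> x $ k * (christoffel g l k i x * g x $ l $ j))
     = (\<Sum>k\<in>UNIV. \<Sum>l\<in>UNIV. g x $ j $ k * (christoffel g k i l x * \<xi> x $ l))"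
    by (subst sum.swap) (simp add: chr_sym[OF x] gsym[OF x] mult_ac)
  have sw2: "(\<Sum>k\<in>UNIV. \<Sum>l\<in>UNIV. \<xi> x $ k * (christoffel g l k j x * g x $ i $ l))
     = (\<Sum>k\<in>UNIV. \<Sum>l\<in>UNIV. g x $ i $ k * (christoffel g k j l x * \<xi> x $ l))"
    by (subst sum.swap) (simp add: chr_sym[OF x] gsym[OF x] mult_ac)
  have "lie_metric g \<xi> i j x = (\<Sum>k\<in>UNIV. \<Sum>l\<in>UNIV. \<xi> x $ k * (christoffel g l k i x * g x $ l $ j))
     + (\<Sum>k\<in>UNIV. \<Sum>l\<in>UNIV. \<xi> x $ k * (christoffel g l k j x * g x $ i $ l))
     + (\<Sum>k\<in>UNIV. g x $ k $ j * pd i (\<lambda>y. \<xi> y $ k) x) + (\<Sum>k\<in>UNIV. g x $ i $ k * pd j (\<lambda>y. \<xi> y $ k) x)"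
    unfolding lie_metric_def g_compat[OF x] by (simp add: sum.distrib sum_distrib_left distrib_left)
  then show ?thesis unfolding sw1 sw2 cov1_flat[OF x]
    by (simp add: sum.distrib sum_distrib_left distrib_left gsym[OF x] algebra_simps)
qed

lemma pd_sq_length: assumes x: "x \<in> U"
  shows "pd a (sq_length g \<xi>) x = 2 * (\<Sum>j\<in>UNIV. \<xi> x $ j * cov1 g \<theta> a j x)"
proof -
  define T1 where "T1 = (\<Sum>i\<in>UNIV. \<Sum>j\<in>UNIV. \<Sum>l\<in>UNIV. \<xi> x $ i * \<xi> x $ j * (christoffel g l a i x * g x $ l $ j))"
  define T1' where "T1' = (\<Sum>i\<in>UNIV. \<Sum>j\<in>UNIV. \<Sum>l\<in>UNIV. \<xi> x $ i * \<xi> x $ j * (christoffel g l a j x * g x $ i $ l))"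
  define T2 where "T2 = (\<Sum>i\<in>UNIV. \<Sum>j\<in>UNIV. g x $ i $ j * pd a (\<lambda>y. \<xi> y $ i) x * \<xi> x $ j)"
  define T3 where "T3 = (\<Sum>i\<in>UNIV. \<Sum>j\<in>UNIV. g x $ i $ j * \<xi> x $ i * pd a (\<lambda>y. \<xi> y $ j) x)"
  have L: "pd a (sq_length g \<xi>) x = T1 + T1' + T2 + T3"
    unfolding sq_length_def[abs_def] T1_def T1'_def T2_def T3_def using x
    by (simp add: g_compat[OF x] sum.distrib sum_distrib_left sum_distrib_right algebra_simps)
  have e1: "T1 = T1'" unfolding T1_def T1'_def
    by (subst sum.swap) (simp add: gsym[OF x] mult_ac)
  have e2: "T2 = T3" unfolding T2_def T3_def
    by (subst sum.swap) (simp add: gsym[OF x] mult_ac)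
  have e3: "T1' = (\<Sum>j\<in>UNIV. \<Sum>k\<in>UNIV. \<Sum>l\<in>UNIV. \<xi> x $ j * (g x $ j $ k * (christoffel g k a l x * \<xi> x $ l)))"
    unfolding T1'_def
    by (rule sum.cong[OF refl], subst sum.swap, rule sum.cong[OF refl], rule sum.cong[OF refl]) (simp add: mult_ac)
  have R: "2 * (\<Sum>j\<in>UNIV. \<xi> x $ j * cov1 g \<theta> a j x) = 2 * T1' + 2 * T3"
    unfolding cov1_flat[OF x] e3 T3_def
    by (simp add: sum.distrib sum_distrib_left distrib_left algebra_simps)
  show ?thesis unfolding L R e1 e2 by simp
qed

end

context rgx
begin

lemma pd_locconst: "x \<in> U \<Longrightarrow> (\<And>y. y \<in> U \<Longrightarrow> f y = c) \<Longrightarrow> pd i f x = 0"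
  using pdc[of x f "\<lambda>y. c" i] by simp

lemma nab2_cong: assumes x: "x \<in> U" and e: "\<And>i j y. y \<in> U \<Longrightarrow> T i j y = T' i j y"
  shows "nab2 T a i j x = nab2 T' a i j x"
  unfolding nab2_def using pdc[OF x e] e[OF x] by simp

lemma nab2_rhs: assumes x: "x \<in> U"
  shows "nab2 (\<lambda>i j y. \<gamma> * g y $ i $ j + \<delta> * \<theta> i y * \<theta> j y) a i j x
     = \<delta> * (cov1 g \<theta> a i x * \<theta> j x + \<theta> i x * cov1 g \<theta> a j x)"
  unfolding nab2_def cov1_def using x
  by (simp add: g_compat[OF x] sum.distrib sum_distrib_left sum_distrib_right algebra_simps)

lemma nab2_lhs: assumes x: "x \<in> U"
  shows "nab2 (\<lambda>i j y. (cov1 g \<theta> i j y + cov1 g \<theta> j i y) / 2 + ricci g i j y) a i j x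
     = (cov2 g \<theta> a i j x + cov2 g \<theta> a j i x) / 2 + nab2 (ricci g) a i j x"
  unfolding nab2_def cov2_def using x
  by (simp add: sum.distrib sum_distrib_left sum_subtractf add_divide_distrib diff_divide_distrib sum_divide_distrib algebra_simps)

lemma main_identity:
  assumes x: "x \<in> U"
    and sc: "\<And>y. y \<in> U \<Longrightarrow> scalar_curv g y = cs"
    and sr: "\<And>y j. y \<in> U \<Longrightarrow> laplace1 g \<theta> j y + ric_sharp g \<theta> j y + pd j (divergence g \<xi>) y = 0"
    and sol: "\<And>y i j. y \<in> U \<Longrightarrow> (1/2) * lie_metric g \<xi> i j y + ricci g i j y
            = \<gamma> * g y $ i $ j + \<delta> * \<theta> i y * \<theta> j y"
  shows "\<delta> * (divergence g \<xi> x * \<theta> j x + (\<Sum>a\<in>UNIV. \<xi> x $ a * cov1 g \<theta> a j x)) = 0"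
proof -
  define C where "C = (\<Sum>a\<in>UNIV. \<Sum>i\<in>UNIV. ginv g x $ a $ i *
      nab2 (\<lambda>i j y. \<gamma> * g y $ i $ j + \<delta> * \<theta> i y * \<theta> j y) a i j x)"
  have C1: "C = \<delta> * (divergence g \<xi> x * \<theta> j x + (\<Sum>a\<in>UNIV. \<xi> x $ a * cov1 g \<theta> a j x))"
  proof -
    have "C = \<delta> * (\<theta> j x * (\<Sum>a\<in>UNIV. \<Sum>i\<in>UNIV. ginv g x $ a $ i * cov1 g \<theta> a i x)
        + (\<Sum>a\<in>UNIV. cov1 g \<theta> a j x * (\<Sum>i\<in>UNIV. ginv g x $ a $ i * \<theta> i x)))"
      unfolding C_def nab2_rhs[OF x]
      by (simp add: sum.distrib sum_distrib_left distrib_left algebra_simps)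
    then show ?thesis unfolding div_eq[OF x] theta_contract[OF x] by (simp add: mult_ac)
  qed
  have "C = (\<Sum>a\<in>UNIV. \<Sum>i\<in>UNIV. ginv g x $ a $ i *
      nab2 (\<lambda>i j y. (cov1 g \<theta> i j y + cov1 g \<theta> j i y) / 2 + ricci g i j y) a i j x)"
    unfolding C_def
    by (intro sum.cong refl arg_cong2[where f="(*)"] nab2_cong[OF x])
       (simp add: sol[symmetric] lie_eq)
  also have "\<dots> = (laplace1 g \<theta> j x + (\<Sum>a\<in>UNIV. \<Sum>i\<in>UNIV. ginv g x $ a $ i * cov2 g \<theta> a j i x)) / 2
       + divRic j x"
    unfolding nab2_lhs[OF x] laplace1_def divRic_def
    by (simp add: sum.distrib sum_distrib_left distrib_left add_divide_distrib sum_divide_distrib algebra_simps)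
  also have "(\<Sum>a\<in>UNIV. \<Sum>i\<in>UNIV. ginv g x $ a $ i * cov2 g \<theta> a j i x)
      = ric_sharp g \<theta> j x + pd j (divergence g \<xi>) x"
  proof -
    have "(\<Sum>a\<in>UNIV. \<Sum>i\<in>UNIV. ginv g x $ a $ i * cov2 g \<theta> a j i x)
        = (\<Sum>a\<in>UNIV. \<Sum>i\<in>UNIV. ginv g x $ a $ i * (cov2 g \<theta> a j i x - cov2 g \<theta> j a i x))
          + (\<Sum>a\<in>UNIV. \<Sum>i\<in>UNIV. ginv g x $ a $ i * cov2 g \<theta> j a i x)"
      by (simp add: sum.distrib[symmetric] algebra_simps)
    also have "\<dots> = ric_sharp g \<theta> j x + pd j (\<lambda>y. \<Sum>a\<in>UNIV. \<Sum>i\<in>UNIV. ginv g y $ a $ i * cov1 g \<theta> a i y) x"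
      using ricci_identity_contr[OF x theta_sm] contr_cov2[OF x theta_sm] by simp
    also have "pd j (\<lambda>y. \<Sum>a\<in>UNIV. \<Sum>i\<in>UNIV. ginv g y $ a $ i * cov1 g \<theta> a i y) x = pd j (divergence g \<xi>) x"
      by (rule pdc[OF x]) (simp add: div_eq)
    finally show ?thesis .
  qed
  also have "divRic j x = 0"
    using contracted_bianchi[OF x, of j] pd_locconst[OF x sc] by simp
  finally have "C = 0" using sr[OF x, of j] by simp
  then show ?thesis using C1 by simp
qed

lemma final:
  assumes sc: "\<And>y. y \<in> U \<Longrightarrow> scalar_curv g y = cs"
    and sr: "\<And>y j. y \<in> U \<Longrightarrow> laplace1 g \<theta> j y + ric_sharp g \<theta> j y + pd j (divergence g \<xi>) y = 0"
    and sol: "\<And>y i j. y \<in> U \<Longrightarrow> (1/2) * lie_metric g \<xi> i j y + ricci g i j y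
            = \<gamma> * g y $ i $ j + \<delta> * \<theta> i y * \<theta> j y"
    and cl: "\<And>y. y \<in> U \<Longrightarrow> sq_length g \<xi> y = c"
  shows "\<delta> = 0 \<or> (\<forall>x\<in>U. divergence g \<xi> x = 0)"
proof (cases "\<delta> = 0")
  case False
  have "divergence g \<xi> x = 0" if x: "x \<in> U" for x
  proof -
    have j: "divergence g \<xi> x * \<theta> j x + (\<Sum>a\<in>UNIV. \<xi> x $ a * cov1 g \<theta> a j x) = 0" for j
      using main_identity[OF x sc sr sol] False by simp
    have z: "(\<Sum>j\<in>UNIV. \<xi> x $ j * cov1 g \<theta> a j x) = 0" for a
      using pd_sq_length[OF x, where a=a] pd_locconst[OF x cl, where i=a] by simp
    have "0 = (\<Sum>j\<in>UNIV. \<xi> x $ j * (divergence g \<xi> x * \<theta> j x + (\<Sum>a\<in>UNIV. \<xi> x $ a * cov1 g \<theta> a j x)))"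
      using j by simp
    also have "\<dots> = divergence g \<xi> x * (\<Sum>j\<in>UNIV. \<theta> j x * \<xi> x $ j)
        + (\<Sum>j\<in>UNIV. \<Sum>a\<in>UNIV. \<xi> x $ a * (\<xi> x $ j * cov1 g \<theta> a j x))"
      by (simp add: distrib_left sum.distrib sum_distrib_left mult_ac)
    also have "(\<Sum>j\<in>UNIV. \<Sum>a\<in>UNIV. \<xi> x $ a * (\<xi> x $ j * cov1 g \<theta> a j x)) = 0"
      by (subst sum.swap) (simp add: sum_distrib_left[symmetric] z)
    finally have dc: "divergence g \<xi> x * c = 0" using theta_xi[of x] cl[OF x] by simp
    show ?thesis
    proof (cases "c = 0")
      case True
      have xi0: "\<xi> y $ i = 0" if y: "y \<in> U" for y i
      proof (rule ccontr)
        assume "\<xi> y $ i \<noteq> 0"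
        then have "\<xi> y \<noteq> 0" by auto
        from gpos[OF y this] have "0 < sq_length g \<xi> y"
          unfolding sq_length_def by (simp add: mult_ac)
        then show False using cl[OF y] True by simp
      qed
      have "pd i (\<lambda>y. \<xi> y $ i) x = 0" for i by (rule pd_locconst[OF x xi0])
      then show ?thesis unfolding divergence_def using xi0[OF x] by simp
    qed (use dc in simp)
  qed
  then show ?thesis by blast
qed (simp)

end

theorem theorem3p3:
  fixes U :: "(real^'n::finite) set"
    and g :: "real^'n \<Rightarrow> real^'n^'n"
    and \<xi> :: "real^'n \<Rightarrow> real^'n"
    and \<gamma> \<delta> :: real
  assumes dim: "CARD('n) \<ge> 3"
    and U_open: "open U"
    and metric: "riemannian_metric U g"
    and xi_smooth: "\<forall>i. smooth_on U (\<lambda>x. \<xi> x $ i)"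
    and const_scal: "\<exists>c. \<forall>x\<in>U. scalar_curv g x = c"
    and const_len: "\<exists>c. \<forall>x\<in>U. sq_length g \<xi> x = c"
    and schroedinger_ricci: "\<forall>x\<in>U. \<forall>j.
          laplace1 g (flat g \<xi>) j x + ric_sharp g (flat g \<xi>) j x + pd j (divergence g \<xi>) x = 0"
    and soliton: "\<forall>x\<in>U. \<forall>i j.
          (1/2) * lie_metric g \<xi> i j x + ricci g i j x
            = \<gamma> * g x $ i $ j + \<delta> * flat g \<xi> i x * flat g \<xi> j x"
  shows "\<delta> = 0 \<or> (\<forall>x\<in>U. divergence g \<xi> x = 0)"
proof -
  interpret rgx U g \<xi>
    by unfold_locales (use U_open metric xi_smooth in auto)
  obtain cs where cs: "\<forall>x\<in>U. scalar_curv g x = cs" using const_scal by blast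
  obtain c where c: "\<forall>x\<in>U. sq_length g \<xi> x = c" using const_len by blast
  show ?thesis
    by (rule final[of cs \<gamma> \<delta> c]) (use cs c schroedinger_ricci soliton in auto)
qed

end
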